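(* Let the system $x^+=f(x,u)$, $\zeta=g(x,u)$ and its associated system $z^+=\psi_x(z,v)$, $\eta=\psi_u(z,v)$ be as in the context. Then the associated system is flat (in the sense defined in the context) if and only if the original system is flat. More precisely, suppose the original system is flat with flat output $$y=\varphi(\zeta_{[-Q_1,-1]},x,u,u_{[1,Q_2]})$$ and parameterization $x=F_x(y_{[-R_1,R_2-1]})$, $u=F_u(y_{[-R_1,R_2]})$. Then the associated system is flat with flat output $$\hat y=\varphi\big(v_{[Q_1,1]},\,\psi_x(z,v),\,\psi_u(z,v),\,\eta_{[-1,-Q_2]}\big)=\hat\varphi(\eta_{[-Q_2,-1]},z,v,v_{[1,Q_1]}),$$ obtained from $\varphi$ by replacing each $\zeta_{[-j]}$ by $v_{[j]}$ ($1\le j\le Q_1$), $x$ by $\psi_x(z,v)$, $u$ by $\psi_u(z,v)$, and each $u_{[j]}$ by $\eta_{[-j]}$ ($1\le j\le Q_2$), componentwise. Its trajectories are related to those of $y$, for any fixed $k$, by $\hat y(k+l)=y(k-l)$, $l\in\mathbb{Z}$ (this imposes no constraint on $\hat y$). The corresponding parameterization of the associated system is $$z=F_x(\hat y_{[R_1-1,-R_2]})=F_z(\hat y_{[-R_2,R_1-1]}),\qquad v=g\big(F_x(\hat y_{[R_1,-R_2+1]}),F_u(\hat y_{[R_1,-R_2]})\big)=F_v(\hat y_{[-R_2,R_1]}),$$ and $\eta=F_u(\hat y_{[R_1,-R_2]})$; here $F_x(\hat y_{[R_1-1,-R_2]})$ means $F_x$ with its argument $y_{[j]}$ replaced by $\hat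 y_{[-j-1]}$ for $j\in[-R_1,R_2-1]$, and $F_x(\hat y_{[R_1,-R_2+1]})$, $F_u(\hat y_{[R_1,-R_2]})$ mean $F_x$, $F_u$ with $y_{[j]}$ replaced by $\hat y_{[-j]}$ (componentwise for multi-indices). Conversely, if the associated system is flat with flat output $\hat y=\hat\varphi(\eta_{[-Q_2,-1]},z,v,v_{[1,Q_1]})$, then the original system is flat with flat output $$y=\hat\varphi\big(u_{[Q_2,1]},f(x,u),g(x,u),\zeta_{[-1,-Q_1]}\big),$$ obtained by replacing each $\eta_{[-j]}$ by $u_{[j]}$, $z$ by $f(x,u)$, $v$ by $g(x,u)$, and each $v_{[j]}$ by $\zeta_{[-j]}$.
   Context: Consider a nonlinear time-invariant discrete-time system $x^{i,+}=f^i(x,u)$, $i=1,\dots,n$, with $x\in\mathbb{R}^n$, $u\in\mathbb{R}^m$, smooth $f$, $\operatorname{rank}(\partial_u f)=m$, and the submersivity condition $\operatorname{rank}(\partial_{(x,u)}f)=n$. Choose $m$ smooth functions $g(x,u)$ such that $(x,u)\mapsto(f(x,u),g(x,u))$ is a local diffeomorphism, with local inverse $x=\psi_x(x^+,\zeta)$, $u=\psi_u(x^+,\zeta)$. The associated system is $z^+=\psi_x(z,v)$, $\eta=\psi_u(z,v)$ with state $z\in\mathbb{R}^n$, input $v\in\mathbb{R}^m$, output $\eta\in\mathbb{R}^m$; its trajectories correspond one-to-one to those of $x^+=f(x,u)$, $\zeta=g(x,u)$ via $x(k+l)=z(k-l+1)$, $u(k+l)=\eta(k-l)$, $\zeta(k+l)=v(k-l)$.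 Notation: for a variable $w$, $w_{[\alpha]}$ denotes its $\alpha$-th forward shift ($w_{[\alpha]}(k)=w(k+\alpha)$) and $w_{[-\alpha]}$ its $\alpha$-th backward shift, $\alpha\ge0$; $w^+=w_{[1]}$. For a multi-component $y=(y^1,\dots,y^m)$ and multi-indices $S_1=(s_{1,1},\dots,s_{1,m})$, $S_2=(s_{2,1},\dots,s_{2,m})$, $y_{[-S_1,S_2]}$ denotes all $y^j_{[i]}$ with $-s_{1,j}\le i\le s_{2,j}$; similarly $\zeta_{[-Q_1,-1]}$, $u_{[1,Q_2]}$ etc.; $y_{[R_2-1]}$ means the shifts $y^j_{[r_{2,j}-1]}$, etc. Flatness (Definition): the system $x^+=f(x,u)$ is flat around an equilibrium $(x_0,u_0)$ if there exist an $m$-tuple of smooth functions $y^j=\varphi^j(\zeta_{[-Q_1,-1]},x,u,u_{[1,Q_2]})$, $j=1,\dots,m$ (the flat output; here $\zeta=g(x,u)$), and smooth maps $x=F_x(y_{[-R_1,R_2-1]})$, $u=F_u(y_{[-R_1,R_2]})$ (the parameterization) such that locally the $n+m$ coordinate functions $x,u$ are expressed by the flat output and its backward and forward shifts; equivalently, these maps establish a one-to-one correspondence between trajectories $(x(k),u(k))$ of the system and arbitrary sequences $y(k)\in\mathbb{R}^m$ (no difference equation imposed on $y$), where $x(k),u(k)$ may depend on finitely many past and future values of $y$ and vice versa. For the associated system, the same definition applies with $(z,v,\eta)$ in place of $(x,u,\zeta)$, $\psi_x$ in place of $f$, and $\psi_u$ in place of $g$. *)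

theory Defs
  imports "HOL-Analysis.Analysis"
begin

text \<open>A move is a one-parameter family of translations of the argument along one
coordinate direction.  The derivative of F along a move at x is the derivative at
t = 0 of t maps to F (mv t x).\<close>

definition dir_deriv :: "('x \<Rightarrow> 'b::real_normed_vector) \<Rightarrow> (real \<Rightarrow> 'x \<Rightarrow> 'x) \<Rightarrow> 'x \<Rightarrow> 'b" where
  "dir_deriv F mv x = vector_derivative (\<lambda>t. F (mv t x)) (at 0)"

fun iter_dd :: "('x \<Rightarrow> 'b::real_normed_vector) \<Rightarrow> (real \<Rightarrow> 'x \<Rightarrow> 'x) list \<Rightarrow> 'x \<Rightarrow> 'b" where
  "iter_dd F [] = F"
| "iter_dd F (mv # mvs) = dir_deriv (iter_dd F mvs) mv"

definition smooth_wrt :: "(real \<Rightarrow> 'x \<Rightarrow> 'x) set \<Rightarrow> 'x::topological_space set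
    \<Rightarrow> ('x \<Rightarrow> 'b::real_normed_vector) \<Rightarrow> bool" where
  "smooth_wrt M U F \<longleftrightarrow> open U \<and>
     (\<forall>mvs \<in> lists M. continuous_on U (iter_dd F mvs) \<and>
        (\<forall>mv \<in> M. \<forall>x \<in> U. (\<lambda>t. iter_dd F mvs (mv t x)) differentiable (at 0)))"

definition euclid_moves :: "(real \<Rightarrow> 'a::euclidean_space \<Rightarrow> 'a) set" where
  "euclid_moves = {(\<lambda>t x. x + t *\<^sub>R b) | b. b \<in> Basis}"

definition smooth_on :: "'a::euclidean_space set \<Rightarrow> ('a \<Rightarrow> 'b::real_normed_vector) \<Rightarrow> bool" where
  "smooth_on U F \<longleftrightarrow> smooth_wrt euclid_moves U F"

text \<open>Coordinate directions of a window of shifts: a function w :: int => 'a collects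
the values w j = s_[j] of the shifted variables; the coordinates are (j, b) with j in
the window W and b a basis vector of 'a.\<close>
definition win_moves :: "int set \<Rightarrow> (real \<Rightarrow> (int \<Rightarrow> 'a::euclidean_space) \<Rightarrow> (int \<Rightarrow> 'a)) set" where
  "win_moves W = {(\<lambda>t w. w(j := w j + t *\<^sub>R b)) | j b. j \<in> W \<and> b \<in> Basis}"

definition shift :: "int \<Rightarrow> (int \<Rightarrow> 'a) \<Rightarrow> (int \<Rightarrow> 'a)" where
  "shift k s = (\<lambda>j. s (k + j))"

definition traj :: "('x \<Rightarrow> 'u \<Rightarrow> 'x) \<Rightarrow> (int \<Rightarrow> 'x) \<Rightarrow> (int \<Rightarrow> 'u) \<Rightarrow> bool" where
  "traj F x u \<longleftrightarrow> (\<forall>k. x (k + 1) = F (x k) (u k))"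

definition sig :: "('x \<Rightarrow> 'u \<Rightarrow> 'z) \<Rightarrow> (int \<Rightarrow> 'x) \<Rightarrow> (int \<Rightarrow> 'u) \<Rightarrow> int \<Rightarrow> 'z \<times> 'x \<times> 'u" where
  "sig G x u = (\<lambda>k. (G (x k) (u k), x k, u k))"

text \<open>flat_with F G x0 u0 phi Fx Fu: around the equilibrium (x0,u0), phi is a flat
output of x+ = F(x,u) (with zeta = G(x,u)), and Fx, Fu its parameterization.
phi takes a window s of the combined signal, s j = (zeta_[j], x_[j], u_[j]), and
depends only on zeta_[-Q1..-1], x, u_[0..Q2]; Fx takes a window w of y (w j = y_[j])
and depends only on y_[-R1..R2-1]; Fu only on y_[-R1..R2].\<close>

definition flat_with ::
  "('x::euclidean_space \<Rightarrow> 'u::euclidean_space \<Rightarrow> 'x) \<Rightarrow> ('x \<Rightarrow> 'u \<Rightarrow> 'u) \<Rightarrow> 'x \<Rightarrow> 'u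
   \<Rightarrow> ((int \<Rightarrow> 'u \<times> 'x \<times> 'u) \<Rightarrow> 'u) \<Rightarrow> ((int \<Rightarrow> 'u) \<Rightarrow> 'x) \<Rightarrow> ((int \<Rightarrow> 'u) \<Rightarrow> 'u) \<Rightarrow> bool" where
  "flat_with F G x0 u0 phi Fx Fu \<longleftrightarrow>
    (\<exists>(Q1::nat) (Q2::nat) (R1::nat) (R2::nat) U V.
      (\<forall>s s'. (\<forall>j \<in> {- int Q1 .. -1}. fst (s j) = fst (s' j))
              \<and> fst (snd (s 0)) = fst (snd (s' 0))
              \<and> (\<forall>j \<in> {0 .. int Q2}. snd (snd (s j)) = snd (snd (s' j)))
              \<longrightarrow> phi s = phi s') \<and>
      (\<forall>w w'. (\<forall>j \<in> {- int R1 .. int R2 - 1}. w j = w' j) \<longrightarrow> Fx w = Fx w') \<and>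
      (\<forall>w w'. (\<forall>j \<in> {- int R1 .. int R2}. w j = w' j) \<longrightarrow> Fu w = Fu w') \<and>
      (\<lambda>j. (G x0 u0, x0, u0)) \<in> U \<and>
      smooth_wrt (win_moves {- int Q1 .. int Q2}) U phi \<and>
      (\<lambda>j. phi (\<lambda>i. (G x0 u0, x0, u0))) \<in> V \<and>
      smooth_wrt (win_moves {- int R1 .. int R2}) V Fx \<and>
      smooth_wrt (win_moves {- int R1 .. int R2}) V Fu \<and>
      (\<forall>x u. traj F x u \<and> (\<forall>k. shift k (sig G x u) \<in> U) \<longrightarrow>
         (let y = (\<lambda>k. phi (shift k (sig G x u)))
          in (\<forall>k. shift k y \<in> V) \<and> (\<forall>k. x k = Fx (shift k y) \<and> u k = Fu (shift k y)))) \<and>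
      (\<forall>y. (\<forall>k. shift k y \<in> V) \<longrightarrow>
         (let x = (\<lambda>k. Fx (shift k y)); u = (\<lambda>k. Fu (shift k y))
          in traj F x u \<and> (\<forall>k. shift k (sig G x u) \<in> U) \<and>
             (\<forall>k. phi (shift k (sig G x u)) = y k))))"

definition is_flat_output ::
  "('x::euclidean_space \<Rightarrow> 'u::euclidean_space \<Rightarrow> 'x) \<Rightarrow> ('x \<Rightarrow> 'u \<Rightarrow> 'u) \<Rightarrow> 'x \<Rightarrow> 'u
   \<Rightarrow> ((int \<Rightarrow> 'u \<times> 'x \<times> 'u) \<Rightarrow> 'u) \<Rightarrow> bool" where
  "is_flat_output F G x0 u0 phi \<longleftrightarrow> (\<exists>Fx Fu. flat_with F G x0 u0 phi Fx Fu)"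

definition flat ::
  "('x::euclidean_space \<Rightarrow> 'u::euclidean_space \<Rightarrow> 'x) \<Rightarrow> ('x \<Rightarrow> 'u \<Rightarrow> 'u) \<Rightarrow> 'x \<Rightarrow> 'u \<Rightarrow> bool" where
  "flat F G x0 u0 \<longleftrightarrow> (\<exists>phi. is_flat_output F G x0 u0 phi)"

text \<open>Given a map phi on windows s with s j = (a_[j], p, b_[j]) and maps P, R of two
variables, the transformed map reads: a_[j] := b_[-j], middle := P(p,b), centre of the
third slot := R(p,b), and third slot at j /= 0 := a_[-j].  With (P,R) = (psi_x, psi_u)
this is the flat output of the associated system built from phi (zeta_[-j] := v_[j],
x := psi_x(z,v), u := psi_u(z,v), u_[j] := eta_[-j]); with (P,R) = (f,g) it is the flat
output of the original system built from a flat output of the associated one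
(eta_[-j] := u_[j], z := f(x,u), v := g(x,u), v_[j] := zeta_[-j]).\<close>

definition subst_out :: "('x \<Rightarrow> 'u \<Rightarrow> 'x) \<Rightarrow> ('x \<Rightarrow> 'u \<Rightarrow> 'u)
   \<Rightarrow> ((int \<Rightarrow> 'u \<times> 'x \<times> 'u) \<Rightarrow> 'y) \<Rightarrow> ((int \<Rightarrow> 'u \<times> 'x \<times> 'u) \<Rightarrow> 'y)" where
  "subst_out P R phi = (\<lambda>s. phi (\<lambda>j.
      (snd (snd (s (- j))),
       P (fst (snd (s (- j)))) (snd (snd (s (- j)))),
       (if j = 0 then R (fst (snd (s 0))) (snd (snd (s 0))) else fst (s (- j))))))"

definition param_z :: "((int \<Rightarrow> 'u) \<Rightarrow> 'x) \<Rightarrow> ((int \<Rightarrow> 'u) \<Rightarrow> 'x)" where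
  "param_z Fx = (\<lambda>w. Fx (\<lambda>j. w (- j - 1)))"

definition param_v :: "('x \<Rightarrow> 'u \<Rightarrow> 'u) \<Rightarrow> ((int \<Rightarrow> 'u) \<Rightarrow> 'x) \<Rightarrow> ((int \<Rightarrow> 'u) \<Rightarrow> 'u)
   \<Rightarrow> ((int \<Rightarrow> 'u) \<Rightarrow> 'u)" where
  "param_v g Fx Fu = (\<lambda>w. g (Fx (\<lambda>j. w (- j))) (Fu (\<lambda>j. w (- j))))"

end

theory Submission
  imports Defs
begin

definition good_moves :: "(real \<Rightarrow> 'x::topological_space \<Rightarrow> 'x) set \<Rightarrow> bool" where
  "good_moves M \<longleftrightarrow> (\<forall>mv\<in>M. \<forall>x. mv 0 x = x \<and> continuous_on UNIV (\<lambda>t. mv t x))"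

lemma ev_in_open:
  assumes "good_moves M" "mv \<in> M" "open V" "x \<in> V"
  shows "eventually (\<lambda>t. mv t x \<in> V) (nhds 0)"
proof -
  have c: "continuous_on UNIV (\<lambda>t. mv t x)" and m0: "mv 0 x = x"
    using assms(1,2) unfolding good_moves_def by auto
  have "isCont (\<lambda>t. mv t x) 0" using c by (simp add: continuous_on_eq_continuous_at)
  hence "((\<lambda>t. mv t x) \<longlongrightarrow> x) (at 0)" using m0 by (simp add: isCont_def)
  hence "eventually (\<lambda>t. mv t x \<in> V) (at 0)"
    using assms(3,4) by (rule topological_tendstoD)
  thus ?thesis using m0 assms(4) unfolding eventually_at_filter
    by (auto elim!: eventually_mono)
qed

lemma dd_local:
  assumes "good_moves M" "mv \<in> M" "open V" "x \<in> V" "\<And>y. y \<in> V \<Longrightarrow> F y = G y"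
  shows "dir_deriv F mv x = dir_deriv G mv x"
    and "(\<lambda>t. F (mv t x)) differentiable (at 0) \<longleftrightarrow> (\<lambda>t. G (mv t x)) differentiable (at 0)"
proof -
  have ev0: "eventually (\<lambda>t. mv t x \<in> V) (nhds 0)" by (rule ev_in_open[OF assms(1-4)])
  have ev: "eventually (\<lambda>t. t \<in> UNIV \<longrightarrow> F (mv t x) = G (mv t x)) (nhds 0)"
    by (rule eventually_mono[OF ev0]) (simp add: assms(5))
  have m0: "mv 0 x = x" using assms(1,2) unfolding good_moves_def by blast
  have e0: "F (mv 0 x) = G (mv 0 x)" unfolding m0 by (rule assms(5)[OF assms(4)])
  show "dir_deriv F mv x = dir_deriv G mv x"
    unfolding dir_deriv_def by (rule vector_derivative_cong_eq[OF ev refl refl UNIV_I])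
  have iff: "((\<lambda>t. F (mv t x)) has_vector_derivative D) (at 0) \<longleftrightarrow>
        ((\<lambda>t. G (mv t x)) has_vector_derivative D) (at 0)" for D
    by (rule has_vector_derivative_cong_ev[OF ev e0])
  show "(\<lambda>t. F (mv t x)) differentiable (at 0) \<longleftrightarrow> (\<lambda>t. G (mv t x)) differentiable (at 0)"
  proof
    assume "(\<lambda>t. F (mv t x)) differentiable (at 0)"
    hence "((\<lambda>t. F (mv t x)) has_vector_derivative vector_derivative (\<lambda>t. F (mv t x)) (at 0)) (at 0)"
      by (simp only: vector_derivative_works)
    hence "((\<lambda>t. G (mv t x)) has_vector_derivative vector_derivative (\<lambda>t. F (mv t x)) (at 0)) (at 0)"
      by (simp only: iff)
    thus "(\<lambda>t. G (mv t x)) differentiable (at 0)" by (rule differentiableI_vector)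
  next
    assume "(\<lambda>t. G (mv t x)) differentiable (at 0)"
    hence "((\<lambda>t. G (mv t x)) has_vector_derivative vector_derivative (\<lambda>t. G (mv t x)) (at 0)) (at 0)"
      by (simp only: vector_derivative_works)
    hence "((\<lambda>t. F (mv t x)) has_vector_derivative vector_derivative (\<lambda>t. G (mv t x)) (at 0)) (at 0)"
      by (simp only: iff)
    thus "(\<lambda>t. F (mv t x)) differentiable (at 0)" by (rule differentiableI_vector)
  qed
qed

lemma iter_dd_append: "iter_dd F (xs @ ys) = iter_dd (iter_dd F ys) xs"
  by (induction xs) auto

lemma smooth_dd:
  assumes "smooth_wrt M V F" "mv \<in> M"
  shows "smooth_wrt M V (dir_deriv F mv)"
proof -
  have eq: "iter_dd (dir_deriv F mv) mvs = iter_dd F (mvs @ [mv])" for mvs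
    by (simp add: iter_dd_append)
  show ?thesis using assms unfolding smooth_wrt_def eq by auto
qed

lemma smooth_mono:
  assumes sm: "smooth_wrt M V F" and MM: "M' \<subseteq> M" and oV': "open V'" and VV: "V' \<subseteq> V"
  shows "smooth_wrt M' V' F"
  unfolding smooth_wrt_def
proof (intro conjI ballI oV')
  fix mvs assume "mvs \<in> lists M'"
  hence mvs: "mvs \<in> lists M" using MM by (rule subsetD[OF lists_mono, rotated])
  have c: "continuous_on V (iter_dd F mvs)" using sm mvs unfolding smooth_wrt_def by blast
  show "continuous_on V' (iter_dd F mvs)" by (rule continuous_on_subset[OF c VV])
  fix mv x assume "mv \<in> M'" "x \<in> V'"
  hence "mv \<in> M" "x \<in> V" using MM VV by auto
  thus "(\<lambda>t. iter_dd F mvs (mv t x)) differentiable at 0" using sm mvs unfolding smooth_wrt_def by blast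
qed

lemma smooth_cont: assumes "smooth_wrt M V F" shows "continuous_on V F"
proof -
  have "[] \<in> lists M" by simp
  hence "continuous_on V (iter_dd F [])" using assms unfolding smooth_wrt_def by blast
  thus ?thesis by simp
qed

lemma smooth_open: "smooth_wrt M V F \<Longrightarrow> open V"
  unfolding smooth_wrt_def by blast

lemma smooth_diff:
  assumes "smooth_wrt M V F" "mv \<in> M" "x \<in> V"
  shows "(\<lambda>t. F (mv t x)) differentiable (at 0)"
proof -
  have "[] \<in> lists M" by simp
  hence "(\<lambda>t. iter_dd F [] (mv t x)) differentiable (at 0)" using assms unfolding smooth_wrt_def by blast
  thus ?thesis by simp
qed

lemma smooth_hvd:
  "smooth_wrt M V F \<Longrightarrow> mv \<in> M \<Longrightarrow> x \<in> V \<Longrightarrow>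
     ((\<lambda>t. F (mv t x)) has_vector_derivative dir_deriv F mv x) (at 0)"
  unfolding dir_deriv_def by (metis smooth_diff vector_derivative_works)

lemma K_smooth:
  assumes gm: "good_moves M" and oV: "open V"
    and K: "\<And>F. F \<in> K \<Longrightarrow> continuous_on V F \<and>
        (\<forall>mv\<in>M. \<forall>x\<in>V. (\<lambda>t. F (mv t x)) differentiable (at 0)) \<and>
        (\<forall>mv\<in>M. \<exists>G\<in>K. \<forall>x\<in>V. dir_deriv F mv x = G x)"
    and F: "F \<in> K"
  shows "smooth_wrt M V F"
proof -
  have claim: "\<exists>G\<in>K. \<forall>x\<in>V. iter_dd F mvs x = G x" if "mvs \<in> lists M" for mvs
    using that
  proof (induction mvs)
    case Nil thus ?case using F by auto
  next
    case (Cons mv mvs)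
    then obtain G where G: "G \<in> K" "\<forall>x\<in>V. iter_dd F mvs x = G x" by auto
    have mvM: "mv \<in> M" using Cons by auto
    obtain G' where G': "G' \<in> K" "\<forall>x\<in>V. dir_deriv G mv x = G' x"
      using K[OF G(1)] mvM by blast
    have "dir_deriv (iter_dd F mvs) mv x = dir_deriv G mv x" if "x \<in> V" for x
      by (rule dd_local(1)[OF gm mvM oV that]) (use G in auto)
    hence "\<forall>x\<in>V. iter_dd F (mv # mvs) x = G' x" using G' by auto
    thus ?case using G' by auto
  qed
  show ?thesis unfolding smooth_wrt_def
  proof (intro conjI ballI oV)
    fix mvs assume mvs: "mvs \<in> lists M"
    obtain G where G: "G \<in> K" "\<forall>x\<in>V. iter_dd F mvs x = G x" using claim[OF mvs] by auto
    show "continuous_on V (iter_dd F mvs)"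
      using K[OF G(1)] G(2) continuous_on_cong by force
    show "(\<lambda>t. iter_dd F mvs (mv t x)) differentiable at 0" if "mv \<in> M" "x \<in> V" for mv x
    proof -
      have "(\<lambda>t. iter_dd F mvs (mv t x)) differentiable at 0 \<longleftrightarrow> (\<lambda>t. G (mv t x)) differentiable at 0"
        by (rule dd_local(2)[OF gm that(1) oV that(2)]) (use G in auto)
      thus ?thesis using K[OF G(1)] that by blast
    qed
  qed
qed

lemma transport:
  assumes sm: "smooth_wrt M U F" and oU': "open U'" and cT: "continuous_on U' T"
    and TU: "T ` U' \<subseteq> U"
    and mv: "\<And>mv'. mv' \<in> M' \<Longrightarrow> \<exists>mv\<in>M. \<forall>t x. T (mv' t x) = mv t (T x)"
  shows "smooth_wrt M' U' (\<lambda>x. F (T x))"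
proof -
  have claim: "\<exists>mvs\<in>lists M. \<forall>x. iter_dd (\<lambda>x. F (T x)) mvs' x = iter_dd F mvs (T x)"
    if "mvs' \<in> lists M'" for mvs'
    using that
  proof (induction mvs')
    case Nil thus ?case by (auto intro!: bexI[of _ "[]"])
  next
    case (Cons mv' mvs')
    then obtain mvs where mvs: "mvs \<in> lists M" "\<forall>x. iter_dd (\<lambda>x. F (T x)) mvs' x = iter_dd F mvs (T x)"
      by auto
    have mvM: "mv' \<in> M'" using Cons by auto
    obtain m where m: "m \<in> M" "\<forall>t x. T (mv' t x) = m t (T x)" using mv[OF mvM] by blast
    have "\<forall>x. iter_dd (\<lambda>x. F (T x)) (mv' # mvs') x = iter_dd F (m # mvs) (T x)"
      using mvs(2) m(2) by (simp add: dir_deriv_def)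
    thus ?case using mvs m by (auto intro!: bexI[of _ "m # mvs"])
  qed
  show ?thesis unfolding smooth_wrt_def
  proof (intro conjI ballI oU')
    fix mvs' assume mvs': "mvs' \<in> lists M'"
    obtain mvs where mvs: "mvs \<in> lists M" "\<forall>x. iter_dd (\<lambda>x. F (T x)) mvs' x = iter_dd F mvs (T x)"
      using claim[OF mvs'] by auto
    have c: "continuous_on U (iter_dd F mvs)" using sm mvs(1) unfolding smooth_wrt_def by auto
    have "continuous_on U' (\<lambda>x. iter_dd F mvs (T x))"
      by (rule continuous_on_compose2[OF c cT TU])
    thus "continuous_on U' (iter_dd (\<lambda>x. F (T x)) mvs')" using mvs(2) by simp
    show "(\<lambda>t. iter_dd (\<lambda>x. F (T x)) mvs' (mv' t x)) differentiable at 0"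
      if "mv' \<in> M'" "x \<in> U'" for mv' x
    proof -
      obtain m where m: "m \<in> M" "\<forall>t x. T (mv' t x) = m t (T x)" using mv[OF \<open>mv' \<in> M'\<close>] by blast
      have "T x \<in> U" using TU \<open>x \<in> U'\<close> by auto
      hence "(\<lambda>t. iter_dd F mvs (m t (T x))) differentiable at 0"
        using sm mvs(1) m(1) unfolding smooth_wrt_def by blast
      thus ?thesis using mvs(2) m(2) by simp
    qed
  qed
qed

lemma iter_dd_zero: "iter_dd (\<lambda>x. 0) mvs = (\<lambda>x. 0)"
  by (induction mvs) (auto simp: dir_deriv_def)

lemma smooth_insert_zero:
  assumes sm: "smooth_wrt M U F"
  shows "smooth_wrt (insert (\<lambda>t x. x) M) U F"
  unfolding smooth_wrt_def
proof (intro conjI ballI)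
  show "open U" by (rule smooth_open[OF sm])
next
  fix mvs assume mvs: "mvs \<in> lists (insert (\<lambda>t x. x) M)"
  have A: "continuous_on U (iter_dd F mvs) \<and>
       (\<forall>mv\<in>insert (\<lambda>t x. x) M. \<forall>x\<in>U. (\<lambda>t. iter_dd F mvs (mv t x)) differentiable at 0)"
  proof (cases "(\<lambda>t x. x) \<in> set mvs")
    case True
    then obtain xs ys where mvs_eq: "mvs = xs @ (\<lambda>t x. x) # ys" by (meson split_list)
    have z: "dir_deriv G (\<lambda>t x. x) = (\<lambda>x. 0)" for G :: "'a \<Rightarrow> 'b"
      by (rule ext) (simp add: dir_deriv_def)
    have "iter_dd F mvs = (\<lambda>x. 0)"
      unfolding mvs_eq iter_dd_append iter_dd.simps(2) z iter_dd_zero ..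
    thus ?thesis by simp
  next
    case False
    have "\<forall>m\<in>set mvs. m \<in> M"
    proof
      fix m assume m: "m \<in> set mvs"
      hence "m \<in> insert (\<lambda>t x. x) M" using mvs unfolding in_lists_conv_set by blast
      moreover have "m \<noteq> (\<lambda>t x. x)"
      proof
        assume "m = (\<lambda>t x. x)"
        with m False show False by simp
      qed
      ultimately show "m \<in> M" by simp
    qed
    hence mvsM: "mvs \<in> lists M" unfolding in_lists_conv_set .
    have "continuous_on U (iter_dd F mvs)" using sm mvsM unfolding smooth_wrt_def by blast
    moreover have "(\<lambda>t. iter_dd F mvs (mv t x)) differentiable at 0"
      if "mv \<in> insert (\<lambda>t x. x) M" "x \<in> U" for mv x
    proof (cases "mv = (\<lambda>t x. x)")
      case True thus ?thesis by simp
    next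
      case False
      hence "mv \<in> M" using that(1) by simp
      thus ?thesis using that(2) sm mvsM unfolding smooth_wrt_def by blast
    qed
    ultimately show ?thesis by blast
  qed
  show "continuous_on U (iter_dd F mvs)" using A by blast
  fix mv x assume mvi: "mv \<in> insert (\<lambda>t x. x) M" and xU: "x \<in> U"
  show "(\<lambda>t. iter_dd F mvs (mv t x)) differentiable at 0"
    by (rule bspec[OF bspec[OF conjunct2[OF A] mvi] xU])
qed

lemma transport0:
  assumes sm: "smooth_wrt M U F" and oU': "open U'" and cT: "continuous_on U' T"
    and TU: "T ` U' \<subseteq> U"
    and mv: "\<And>mv'. mv' \<in> M' \<Longrightarrow> (\<forall>t x. T (mv' t x) = T x) \<or> (\<exists>mv\<in>M. \<forall>t x. T (mv' t x) = mv t (T x))"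
  shows "smooth_wrt M' U' (\<lambda>x. F (T x))"
proof (rule transport[OF smooth_insert_zero[OF sm] oU' cT TU])
  fix mv' assume "mv' \<in> M'"
  from mv[OF this] show "\<exists>mv\<in>insert (\<lambda>t x. x) M. \<forall>t x. T (mv' t x) = mv t (T x)"
  proof
    assume "\<forall>t x. T (mv' t x) = T x"
    thus ?thesis by (intro bexI[of _ "\<lambda>t x. x"]) auto
  next
    assume "\<exists>mv\<in>M. \<forall>t x. T (mv' t x) = mv t (T x)"
    then obtain m where "m \<in> M" "\<forall>t x. T (mv' t x) = m t (T x)" by blast
    thus ?thesis by (intro bexI[of _ m]) auto
  qed
qed

lemma linear_smooth:
  assumes gm: "good_moves M" and L: "bounded_linear L" and sm: "smooth_wrt M V F"
  shows "smooth_wrt M V (\<lambda>x. L (F x))"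
proof -
  have oV: "open V" using sm by (rule smooth_open)
  let ?K = "{(\<lambda>x. L (G x)) | G. smooth_wrt M V G}"
  show ?thesis
  proof (rule K_smooth[OF gm oV, of ?K])
    fix H assume "H \<in> ?K"
    then obtain G where H: "H = (\<lambda>x. L (G x))" and G: "smooth_wrt M V G" by auto
    have hv: "((\<lambda>t. H (mv t x)) has_vector_derivative L (dir_deriv G mv x)) (at 0)"
      if "mv \<in> M" "x \<in> V" for mv x
      unfolding H using bounded_linear.has_vector_derivative[OF L smooth_hvd[OF G that]] .
    show "continuous_on V H \<and> (\<forall>mv\<in>M. \<forall>x\<in>V. (\<lambda>t. H (mv t x)) differentiable at 0) \<and>
        (\<forall>mv\<in>M. \<exists>G\<in>?K. \<forall>x\<in>V. dir_deriv H mv x = G x)"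
    proof (intro conjI ballI)
      show "continuous_on V H" unfolding H
        by (rule continuous_on_compose2[OF linear_continuous_on[OF L] smooth_cont[OF G] subset_UNIV])
      show "(\<lambda>t. H (mv t x)) differentiable at 0" if "mv \<in> M" "x \<in> V" for mv x
        using hv[OF that] by (rule differentiableI_vector)
      fix mv assume mv: "mv \<in> M"
      show "\<exists>G'\<in>?K. \<forall>x\<in>V. dir_deriv H mv x = G' x"
      proof (rule bexI[of _ "\<lambda>x. L (dir_deriv G mv x)"])
        show "\<forall>x\<in>V. dir_deriv H mv x = L (dir_deriv G mv x)"
        proof
          fix x assume "x \<in> V"
          show "dir_deriv H mv x = L (dir_deriv G mv x)"
            unfolding dir_deriv_def[of H] by (rule vector_derivative_at[OF hv[OF mv \<open>x \<in> V\<close>]])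
        qed
        show "(\<lambda>x. L (dir_deriv G mv x)) \<in> ?K"
          by (rule CollectI, rule exI[of _ "dir_deriv G mv"]) (simp add: smooth_dd[OF G mv])
      qed
    qed
  next
    show "(\<lambda>x. L (F x)) \<in> ?K"
      by (rule CollectI, rule exI[of _ F]) (simp add: sm)
  qed
qed

lemma pair_smooth:
  assumes gm: "good_moves M" and s1: "smooth_wrt M V F1" and s2: "smooth_wrt M V F2"
  shows "smooth_wrt M V (\<lambda>x. (F1 x, F2 x))"
proof -
  have oV: "open V" using s1 by (rule smooth_open)
  let ?K = "{(\<lambda>x. (G1 x, G2 x)) | G1 G2. smooth_wrt M V G1 \<and> smooth_wrt M V G2}"
  show ?thesis
  proof (rule K_smooth[OF gm oV, of ?K])
    fix H assume "H \<in> ?K"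
    then obtain G1 G2 where H: "H = (\<lambda>x. (G1 x, G2 x))" and G: "smooth_wrt M V G1" "smooth_wrt M V G2"
      by auto
    have hv: "((\<lambda>t. H (mv t x)) has_vector_derivative (dir_deriv G1 mv x, dir_deriv G2 mv x)) (at 0)"
      if "mv \<in> M" "x \<in> V" for mv x
      unfolding H by (intro has_vector_derivative_Pair smooth_hvd[OF G(1) that] smooth_hvd[OF G(2) that])
    show "continuous_on V H \<and> (\<forall>mv\<in>M. \<forall>x\<in>V. (\<lambda>t. H (mv t x)) differentiable at 0) \<and>
        (\<forall>mv\<in>M. \<exists>G\<in>?K. \<forall>x\<in>V. dir_deriv H mv x = G x)"
    proof (intro conjI ballI)
      show "continuous_on V H" unfolding H
        using smooth_cont[OF G(1)] smooth_cont[OF G(2)] by (intro continuous_intros)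
      show "(\<lambda>t. H (mv t x)) differentiable at 0" if "mv \<in> M" "x \<in> V" for mv x
        using hv[OF that] by (rule differentiableI_vector)
      fix mv assume mv: "mv \<in> M"
      show "\<exists>G'\<in>?K. \<forall>x\<in>V. dir_deriv H mv x = G' x"
      proof (rule bexI[of _ "\<lambda>x. (dir_deriv G1 mv x, dir_deriv G2 mv x)"])
        show "\<forall>x\<in>V. dir_deriv H mv x = (dir_deriv G1 mv x, dir_deriv G2 mv x)"
        proof
          fix x assume "x \<in> V"
          show "dir_deriv H mv x = (dir_deriv G1 mv x, dir_deriv G2 mv x)"
            unfolding dir_deriv_def[of H] by (rule vector_derivative_at[OF hv[OF mv \<open>x \<in> V\<close>]])
        qed
        show "(\<lambda>x. (dir_deriv G1 mv x, dir_deriv G2 mv x)) \<in> ?K"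
          by (rule CollectI, rule exI[of _ "dir_deriv G1 mv"], rule exI[of _ "dir_deriv G2 mv"])
            (simp add: smooth_dd[OF G(1) mv] smooth_dd[OF G(2) mv])
      qed
    qed
  next
    show "(\<lambda>x. (F1 x, F2 x)) \<in> ?K"
      by (rule CollectI, rule exI[of _ F1], rule exI[of _ F2]) (simp add: s1 s2)
  qed
qed

lemma seg_bound:
  fixes \<psi> :: "real \<Rightarrow> 'b::real_normed_vector"
  assumes d: "\<And>s. s \<in> closed_segment 0 c \<Longrightarrow> (\<psi> has_vector_derivative D s) (at s)"
    and B: "\<And>s. s \<in> closed_segment 0 c \<Longrightarrow> norm (D s) \<le> B"
  shows "norm (\<psi> c - \<psi> 0) \<le> B * \<bar>c\<bar>"
proof -
  have "norm (\<psi> c - \<psi> 0) \<le> B * norm (c - 0)"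
  proof (rule differentiable_bound[where f' = "\<lambda>s h. h *\<^sub>R D s"])
    show "convex (closed_segment 0 c)" by simp
    show "(\<psi> has_derivative (\<lambda>h. h *\<^sub>R D s)) (at s within closed_segment 0 c)"
      if "s \<in> closed_segment 0 c" for s
      using has_vector_derivative_at_within[OF d[OF that]] unfolding has_vector_derivative_def .
    show "onorm (\<lambda>h. h *\<^sub>R D s) \<le> B" if "s \<in> closed_segment 0 c" for s
      using B[OF that] by (simp add: onorm_scaleR_left[OF bounded_linear_ident] onorm_id)
  qed auto
  thus ?thesis by simp
qed

lemma unif_lin:
  fixes G :: "'x::topological_space \<times> 'e::euclidean_space \<Rightarrow> 'b::real_normed_vector"
  assumes oN: "open N" and p0: "(x0, e0) \<in> N"
    and cont: "\<And>b. b \<in> Basis \<Longrightarrow> continuous_on N (Gb b)"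
    and hvd: "\<And>b x e. b \<in> Basis \<Longrightarrow> (x, e) \<in> N \<Longrightarrow>
                ((\<lambda>t. G (x, e + t *\<^sub>R b)) has_vector_derivative Gb b (x, e)) (at 0)"
    and eps: "\<epsilon> > 0"
  shows "\<exists>S \<delta>. open S \<and> x0 \<in> S \<and> \<delta> > 0 \<and> (\<forall>x\<in>S. \<forall>e. norm (e - e0) < \<delta> \<longrightarrow>
     norm (G (x, e) - G (x, e0) - (\<Sum>b\<in>Basis. ((e - e0) \<bullet> b) *\<^sub>R Gb b (x0, e0))) \<le> \<epsilon> * norm (e - e0))"
proof -
  define n where "n = real DIM('e)"
  have npos: "n > 0" unfolding n_def by simp
  define \<epsilon>' where "\<epsilon>' = \<epsilon> / n"
  have e'pos: "\<epsilon>' > 0" unfolding \<epsilon>'_def using eps npos by simp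
  define W where "W = (\<Inter>b\<in>Basis. (Gb b -` ball (Gb b (x0, e0)) \<epsilon>' \<inter> N))"
  have oW: "open W" unfolding W_def
  proof (rule open_INT)
    show "\<forall>b\<in>Basis. open (Gb b -` ball (Gb b (x0, e0)) \<epsilon>' \<inter> N)"
      using cont oN by (simp add: continuous_on_open_vimage)
  qed simp
  have pW: "(x0, e0) \<in> W" unfolding W_def using p0 e'pos by auto
  obtain S T where ST: "open S" "open T" "(x0, e0) \<in> S \<times> T" "S \<times> T \<subseteq> W"
    using open_prod_elim[OF oW pW] by metis
  obtain \<delta>0 where d0: "\<delta>0 > 0" "ball e0 \<delta>0 \<subseteq> T" using ST(2,3) by (meson SigmaD2 openE)
  define \<delta> where "\<delta> = \<delta>0 / n"
  have dpos: "\<delta> > 0" unfolding \<delta>_def using d0 npos by simp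
  have inW: "(x, e) \<in> N \<and> (\<forall>b\<in>Basis. norm (Gb b (x, e) - Gb b (x0, e0)) < \<epsilon>')"
    if "x \<in> S" "norm (e - e0) < \<delta>0" for x e
  proof -
    have "e \<in> T" using d0(2) that(2) by (auto simp: dist_norm norm_minus_commute)
    hence "(x, e) \<in> W" using ST(4) that(1) by auto
    thus ?thesis unfolding W_def using nonempty_Basis by (auto simp: dist_norm norm_minus_commute)
  qed
  have main: "norm (G (x, e) - G (x, e0) - (\<Sum>b\<in>Basis. ((e - e0) \<bullet> b) *\<^sub>R Gb b (x0, e0)))
        \<le> \<epsilon> * norm (e - e0)" if xS: "x \<in> S" and ed: "norm (e - e0) < \<delta>" for x e
  proof -
    define c where "c b = (e - e0) \<bullet> b" for b
    define q where "q T0 = e0 + (\<Sum>b\<in>T0. c b *\<^sub>R b)" for T0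
    have cle: "\<bar>c b\<bar> \<le> norm (e - e0)" if "b \<in> Basis" for b
      unfolding c_def using Basis_le_norm[OF that] .
    have sumc: "(\<Sum>b\<in>Basis. \<bar>c b\<bar>) \<le> n * norm (e - e0)"
    proof -
      have "(\<Sum>b\<in>Basis. \<bar>c b\<bar>) \<le> (\<Sum>b\<in>(Basis::'e set). norm (e - e0))"
        by (rule sum_mono) (rule cle)
      thus ?thesis unfolding n_def by simp
    qed
    have sumc2: "(\<Sum>b\<in>Basis. \<bar>c b\<bar>) < \<delta>0"
    proof -
      have "n * norm (e - e0) < n * \<delta>" using ed npos by simp
      also have "n * \<delta> = \<delta>0" unfolding \<delta>_def using npos by simp
      finally show ?thesis using sumc by linarith
    qed
    have ind: "norm (G (x, q T0) - G (x, e0) - (\<Sum>b\<in>T0. c b *\<^sub>R Gb b (x0, e0)))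
                 \<le> \<epsilon>' * (\<Sum>b\<in>T0. \<bar>c b\<bar>)" if "T0 \<subseteq> Basis" for T0
      using finite_subset[OF that finite_Basis] that
    proof (induction T0 rule: finite_subset_induct')
      case empty thus ?case by (simp add: q_def)
    next
      case (insert b T0)
      have qins: "q (insert b T0) = q T0 + c b *\<^sub>R b"
        unfolding q_def using insert.hyps by (simp add: sum.insert algebra_simps)
      have pt: "(x, q T0 + s *\<^sub>R b) \<in> N \<and> norm (Gb b (x, q T0 + s *\<^sub>R b) - Gb b (x0, e0)) < \<epsilon>'"
        if "s \<in> closed_segment 0 (c b)" for s
      proof -
        have sle: "\<bar>s\<bar> \<le> \<bar>c b\<bar>" using that
          by (auto simp: closed_segment_eq_real_ivl split: if_splits)
        have "norm (q T0 + s *\<^sub>R b - e0) = norm ((\<Sum>b'\<in>T0. c b' *\<^sub>R b') + s *\<^sub>R b)"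
          unfolding q_def by (simp add: algebra_simps)
        also have "\<dots> \<le> (\<Sum>b'\<in>T0. \<bar>c b'\<bar>) + \<bar>s\<bar>"
        proof -
          have "norm (\<Sum>b'\<in>T0. c b' *\<^sub>R b') \<le> (\<Sum>b'\<in>T0. norm (c b' *\<^sub>R b'))" by (rule norm_sum)
          also have "\<dots> = (\<Sum>b'\<in>T0. \<bar>c b'\<bar>)"
            using insert.hyps(3) by (intro sum.cong) (auto simp: subset_iff)
          finally show ?thesis using insert.hyps(2) norm_triangle_ineq[of "\<Sum>b'\<in>T0. c b' *\<^sub>R b'" "s *\<^sub>R b"]
            by simp
        qed
        also have "\<dots> \<le> (\<Sum>b'\<in>insert b T0. \<bar>c b'\<bar>)"
          using insert.hyps sle by (simp add: sum.insert finite_subset[OF _ finite_Basis])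
        also have "\<dots> \<le> (\<Sum>b'\<in>Basis. \<bar>c b'\<bar>)"
          by (rule sum_mono2[OF finite_Basis]) (use insert.hyps in auto)
        also have "\<dots> < \<delta>0" by (rule sumc2)
        finally show ?thesis using inW[OF xS] insert.hyps(2) by blast
      qed
      define \<psi> where "\<psi> s = G (x, q T0 + s *\<^sub>R b) - s *\<^sub>R Gb b (x0, e0)" for s
      have d\<psi>: "(\<psi> has_vector_derivative (Gb b (x, q T0 + s *\<^sub>R b) - Gb b (x0, e0))) (at s)"
        if "s \<in> closed_segment 0 (c b)" for s
      proof -
        have h1: "((\<lambda>t. G (x, (q T0 + s *\<^sub>R b) + t *\<^sub>R b)) has_vector_derivative Gb b (x, q T0 + s *\<^sub>R b)) (at 0)"
          using hvd[OF insert.hyps(2)] pt[OF that] by blast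
        have h2: "((\<lambda>s'. s' - s) has_vector_derivative 1) (at s)"
          by (auto intro!: derivative_eq_intros)
        have h3: "(((\<lambda>t. G (x, (q T0 + s *\<^sub>R b) + t *\<^sub>R b)) \<circ> (\<lambda>s'. s' - s)) has_vector_derivative
                    1 *\<^sub>R Gb b (x, q T0 + s *\<^sub>R b)) (at s)"
          by (rule vector_diff_chain_at[OF h2]) (simp add: h1)
        have eq: "((\<lambda>t. G (x, (q T0 + s *\<^sub>R b) + t *\<^sub>R b)) \<circ> (\<lambda>s'. s' - s)) = (\<lambda>s'. G (x, q T0 + s' *\<^sub>R b))"
          by (rule ext) (simp add: algebra_simps)
        have "((\<lambda>s'. G (x, q T0 + s' *\<^sub>R b)) has_vector_derivative Gb b (x, q T0 + s *\<^sub>R b)) (at s)"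
          using h3 unfolding eq by simp
        moreover have "((\<lambda>s'. s' *\<^sub>R Gb b (x0, e0)) has_vector_derivative Gb b (x0, e0)) (at s)"
          by (auto intro!: derivative_eq_intros)
        ultimately show ?thesis unfolding \<psi>_def by (rule has_vector_derivative_diff)
      qed
      have "norm (\<psi> (c b) - \<psi> 0) \<le> \<epsilon>' * \<bar>c b\<bar>"
        by (rule seg_bound[OF d\<psi>]) (use pt in \<open>auto intro: less_imp_le\<close>)
      hence step: "norm (G (x, q (insert b T0)) - G (x, q T0) - c b *\<^sub>R Gb b (x0, e0)) \<le> \<epsilon>' * \<bar>c b\<bar>"
        unfolding \<psi>_def qins by (simp add: algebra_simps)
      have "norm (G (x, q (insert b T0)) - G (x, e0) - (\<Sum>b'\<in>insert b T0. c b' *\<^sub>R Gb b' (x0, e0)))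
          = norm ((G (x, q (insert b T0)) - G (x, q T0) - c b *\<^sub>R Gb b (x0, e0)) +
                  (G (x, q T0) - G (x, e0) - (\<Sum>b'\<in>T0. c b' *\<^sub>R Gb b' (x0, e0))))"
        using insert.hyps by (simp add: sum.insert finite_subset[OF _ finite_Basis] algebra_simps)
      also have "\<dots> \<le> \<epsilon>' * \<bar>c b\<bar> + \<epsilon>' * (\<Sum>b'\<in>T0. \<bar>c b'\<bar>)"
        by (rule order_trans[OF norm_triangle_ineq add_mono[OF step insert.IH]])
      also have "\<dots> = \<epsilon>' * (\<Sum>b'\<in>insert b T0. \<bar>c b'\<bar>)"
        using insert.hyps by (simp add: sum.insert finite_subset[OF _ finite_Basis] algebra_simps)
      finally show ?case .
    qed
    have qB: "q Basis = e" unfolding q_def c_def by (simp add: euclidean_representation)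
    have "norm (G (x, e) - G (x, e0) - (\<Sum>b\<in>Basis. c b *\<^sub>R Gb b (x0, e0)))
         \<le> \<epsilon>' * (\<Sum>b\<in>Basis. \<bar>c b\<bar>)" using ind[of Basis] unfolding qB by simp
    also have "\<dots> \<le> \<epsilon>' * (n * norm (e - e0))" by (rule mult_left_mono[OF sumc]) (use e'pos in simp)
    also have "\<dots> = \<epsilon> * norm (e - e0)" unfolding \<epsilon>'_def using npos by simp
    finally show ?thesis unfolding c_def .
  qed
  show ?thesis using ST(1,3) dpos main by (intro exI[of _ S] exI[of _ \<delta>]) auto
qed

lemma chain_curve:
  fixes G :: "'x::topological_space \<times> 'e::euclidean_space \<Rightarrow> 'b::real_normed_vector"
  assumes gc: "isCont \<gamma> 0" and g0: "\<gamma> 0 = x0"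
    and ad: "(\<alpha> has_vector_derivative \<alpha>') (at 0)" and a0: "\<alpha> 0 = e0"
    and h1: "((\<lambda>t. G (\<gamma> t, e0)) has_vector_derivative D1) (at 0)"
    and L: "bounded_linear Lf"
    and unif: "\<And>\<epsilon>. \<epsilon> > 0 \<Longrightarrow> \<exists>S \<delta>. open S \<and> x0 \<in> S \<and> \<delta> > 0 \<and> (\<forall>x\<in>S. \<forall>e. norm (e - e0) < \<delta> \<longrightarrow>
       norm (G (x, e) - G (x, e0) - Lf (e - e0)) \<le> \<epsilon> * norm (e - e0))"
  shows "((\<lambda>t. G (\<gamma> t, \<alpha> t)) has_vector_derivative (D1 + Lf \<alpha>')) (at 0)"
proof -
  define R where "R t = G (\<gamma> t, \<alpha> t) - G (\<gamma> t, e0) - Lf (\<alpha> t - e0)" for t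
  have R0: "R 0 = 0" by (simp add: R_def a0 g0 linear_0[OF bounded_linear.linear[OF L]])
  have lim: "((\<lambda>y. norm (R y) / \<bar>y\<bar>) \<longlongrightarrow> 0) (at 0)"
  proof (rule tendstoI)
    fix \<epsilon>0 :: real assume e0pos: "\<epsilon>0 > 0"
    define C where "C = norm \<alpha>' + 1"
    have Cpos: "C > 0" unfolding C_def by (simp add: add_nonneg_pos)
    obtain S \<delta> where S: "open S" "x0 \<in> S" "\<delta> > 0"
      and Sb: "\<And>x e. x \<in> S \<Longrightarrow> norm (e - e0) < \<delta> \<Longrightarrow>
         norm (G (x, e) - G (x, e0) - Lf (e - e0)) \<le> (\<epsilon>0 / (2 * C)) * norm (e - e0)"
      using unif[of "\<epsilon>0 / (2 * C)"] e0pos Cpos by auto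
    have "(\<gamma> \<longlongrightarrow> x0) (at 0)" using gc g0 by (simp add: isCont_def)
    hence ev1: "eventually (\<lambda>t. \<gamma> t \<in> S) (at 0)" using S(1,2) by (rule topological_tendstoD)
    have "isCont \<alpha> 0" using ad by (rule has_vector_derivative_continuous)
    hence "(\<alpha> \<longlongrightarrow> e0) (at 0)" using a0 by (simp add: isCont_def)
    hence ev2: "eventually (\<lambda>t. dist (\<alpha> t) e0 < \<delta>) (at 0)" using S(3) by (rule tendstoD)
    have "((\<lambda>y. norm ((\<alpha> y - \<alpha> 0) - (y - 0) *\<^sub>R \<alpha>') / norm (y - 0)) \<longlongrightarrow> 0) (at 0)"
      using ad unfolding has_vector_derivative_def has_derivative_iff_norm by blast
    hence "eventually (\<lambda>y. dist (norm ((\<alpha> y - \<alpha> 0) - (y - 0) *\<^sub>R \<alpha>') / norm (y - 0)) 0 < 1) (at 0)"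
      by (rule tendstoD) simp
    hence ev3: "eventually (\<lambda>y. norm (\<alpha> y - e0 - y *\<^sub>R \<alpha>') / \<bar>y\<bar> < 1) (at 0)"
      by (rule eventually_mono) (simp add: a0)
    have ev4: "eventually (\<lambda>y. y \<noteq> 0) (at (0::real))" by (simp add: eventually_at_filter)
    show "eventually (\<lambda>y. dist (norm (R y) / \<bar>y\<bar>) 0 < \<epsilon>0) (at 0)"
      using ev1 ev2 ev3 ev4
    proof eventually_elim
      case (elim t)
      have tpos: "\<bar>t\<bar> > 0" using elim(4) by simp
      have "norm (\<alpha> t - e0 - t *\<^sub>R \<alpha>') < \<bar>t\<bar>" using elim(3) tpos by (simp add: field_simps)
      hence an: "norm (\<alpha> t - e0) \<le> C * \<bar>t\<bar>"
        using norm_triangle_ineq[of "\<alpha> t - e0 - t *\<^sub>R \<alpha>'" "t *\<^sub>R \<alpha>'"] unfolding C_def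
        by (simp add: algebra_simps)
      have "norm (R t) \<le> (\<epsilon>0 / (2 * C)) * norm (\<alpha> t - e0)"
        unfolding R_def using Sb[OF elim(1)] elim(2) by (simp add: dist_norm)
      also have "\<dots> \<le> (\<epsilon>0 / (2 * C)) * (C * \<bar>t\<bar>)"
        by (rule mult_left_mono[OF an]) (use e0pos Cpos in simp)
      also have "\<dots> = (\<epsilon>0 / 2) * \<bar>t\<bar>" using Cpos by simp
      finally have "norm (R t) / \<bar>t\<bar> \<le> \<epsilon>0 / 2" using tpos by (simp add: field_simps)
      hence "norm (R t) / \<bar>t\<bar> < \<epsilon>0" using e0pos by linarith
      thus ?case by (simp add: dist_real_def)
    qed
  qed
  have hR: "(R has_vector_derivative 0) (at 0)"
    unfolding has_vector_derivative_def has_derivative_iff_norm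
    using lim by (simp add: R0)
  have hL: "((\<lambda>t. Lf (\<alpha> t - e0)) has_vector_derivative Lf \<alpha>') (at 0)"
  proof -
    have "((\<lambda>t. \<alpha> t - e0) has_vector_derivative \<alpha>' - 0) (at 0)"
      by (rule has_vector_derivative_diff[OF ad has_vector_derivative_const])
    thus ?thesis using bounded_linear.has_vector_derivative[OF L] by simp
  qed
  have "((\<lambda>t. G (\<gamma> t, e0) + Lf (\<alpha> t - e0) + R t) has_vector_derivative (D1 + Lf \<alpha>' + 0)) (at 0)"
    by (intro has_vector_derivative_add h1 hL hR)
  moreover have "(\<lambda>t. G (\<gamma> t, e0) + Lf (\<alpha> t - e0) + R t) = (\<lambda>t. G (\<gamma> t, \<alpha> t))"
    by (rule ext) (simp add: R_def)
  ultimately show ?thesis by simp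
qed

definition pmoves :: "(real \<Rightarrow> 'x \<Rightarrow> 'x) set \<Rightarrow> (real \<Rightarrow> 'x \<times> 'e::euclidean_space \<Rightarrow> 'x \<times> 'e) set" where
  "pmoves M = (\<lambda>mv. \<lambda>t p. (mv t (fst p), snd p)) ` M \<union> (\<lambda>b. \<lambda>t p. (fst p, snd p + t *\<^sub>R b)) ` Basis"

lemma pm_in: "mv \<in> M \<Longrightarrow> (\<lambda>t p. (mv t (fst p), snd p)) \<in> pmoves M"
  unfolding pmoves_def by blast

lemma em_in: "b \<in> Basis \<Longrightarrow> (\<lambda>t p. (fst p, snd p + t *\<^sub>R b)) \<in> pmoves M"
  unfolding pmoves_def by blast

lemma good_pmoves:
  fixes M :: "(real \<Rightarrow> 'x::topological_space \<Rightarrow> 'x) set"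
  assumes "good_moves M" shows "good_moves (pmoves M :: (real \<Rightarrow> 'x \<times> 'e::euclidean_space \<Rightarrow> _) set)"
  unfolding good_moves_def
proof
  fix m :: "real \<Rightarrow> 'x \<times> 'e \<Rightarrow> 'x \<times> 'e" assume "m \<in> pmoves M"
  then consider (a) mv where "mv \<in> M" "m = (\<lambda>t p. (mv t (fst p), snd p))"
    | (b) b where "b \<in> (Basis :: 'e set)" "m = (\<lambda>t p. (fst p, snd p + t *\<^sub>R b))"
    unfolding pmoves_def by blast
  thus "\<forall>x. m 0 x = x \<and> continuous_on UNIV (\<lambda>t. m t x)"
  proof cases
    case a
    have "mv 0 x = x \<and> continuous_on UNIV (\<lambda>t. mv t x)" for x
      using assms a(1) unfolding good_moves_def by blast
    thus ?thesis unfolding a(2) by (auto intro!: continuous_intros)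
  next
    case b
    thus ?thesis by (auto intro!: continuous_intros)
  qed
qed

inductive_set KS :: "(real \<Rightarrow> 'x::topological_space \<Rightarrow> 'x) set \<Rightarrow> 'x set \<Rightarrow> ('x \<times> 'e::euclidean_space) set \<Rightarrow> ('x \<Rightarrow> 'e)
     \<Rightarrow> ('x \<Rightarrow> 'b::real_normed_vector) set"
  for M V N A where
  base: "smooth_wrt (pmoves M) N G \<Longrightarrow> (\<lambda>x. G (x, A x)) \<in> KS M V N A"
| scal: "smooth_wrt M V (r :: 'x \<Rightarrow> real) \<Longrightarrow> F \<in> KS M V N A \<Longrightarrow> (\<lambda>x. r x *\<^sub>R F x) \<in> KS M V N A"
| add: "F1 \<in> KS M V N A \<Longrightarrow> F2 \<in> KS M V N A \<Longrightarrow> (\<lambda>x. F1 x + F2 x) \<in> KS M V N A"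
| zero: "(\<lambda>x. 0) \<in> KS M V N A"
| cong: "F \<in> KS M V N A \<Longrightarrow> (\<And>x. x \<in> V \<Longrightarrow> F' x = F x) \<Longrightarrow> F' \<in> KS M V N A"

lemma KS_sum:
  assumes "finite S" "\<And>b. b \<in> S \<Longrightarrow> f b \<in> KS M V N A"
  shows "(\<lambda>x. \<Sum>b\<in>S. f b x) \<in> KS M V N A"
  using assms
proof (induction S rule: finite_induct)
  case empty thus ?case by (simp add: KS.zero)
next
  case (insert b S)
  have "(\<lambda>x. f b x + (\<Sum>b\<in>S. f b x)) \<in> KS M V N A"
    by (rule KS.add) (use insert in auto)
  thus ?case by (rule KS.cong) (use insert.hyps in simp)
qed

lemma KS_props:
  fixes A :: "'x::topological_space \<Rightarrow> 'e::euclidean_space"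
  assumes gm: "good_moves M" and oV: "open V" and sA: "smooth_wrt M V A"
    and AN: "\<And>x. x \<in> V \<Longrightarrow> (x, A x) \<in> N"
    and F: "(F :: 'x \<Rightarrow> 'b::real_normed_vector) \<in> KS M V N A"
  shows "continuous_on V F \<and> (\<forall>mv\<in>M. \<forall>x\<in>V. (\<lambda>t. F (mv t x)) differentiable (at 0)) \<and>
     (\<forall>mv\<in>M. \<exists>F'\<in>KS M V N A. \<forall>x\<in>V. dir_deriv F mv x = F' x)"
  using F
proof (induction rule: KS.induct)
  case (base G)
  have oN: "open N" using base by (rule smooth_open)
  have cA: "continuous_on V (\<lambda>x. (x, A x))"
    by (intro continuous_intros smooth_cont[OF sA])
  have cont: "continuous_on V (\<lambda>x. G (x, A x))"
    by (rule continuous_on_compose2[OF smooth_cont[OF base] cA]) (use AN in auto)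
  define Lf where "Lf x h = (\<Sum>b\<in>Basis. (h \<bullet> b) *\<^sub>R dir_deriv G (\<lambda>t p. (fst p, snd p + t *\<^sub>R b)) (x, A x))"
    for x and h :: 'e
  define DG where "DG mv x = dir_deriv G (\<lambda>t p. (mv t (fst p), snd p)) (x, A x) + Lf x (dir_deriv A mv x)"
    for mv x
  have hvd: "((\<lambda>t. G (mv t x, A (mv t x))) has_vector_derivative DG mv x) (at 0)"
    if mv: "mv \<in> M" and x: "x \<in> V" for mv x
  proof -
    have m0: "mv 0 x = x" and mc: "continuous_on UNIV (\<lambda>t. mv t x)"
      using gm mv unfolding good_moves_def by auto
    have gc: "isCont (\<lambda>t. mv t x) 0" using mc by (simp add: continuous_on_eq_continuous_at)
    have h1: "((\<lambda>t. G (mv t x, A x)) has_vector_derivative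
               dir_deriv G (\<lambda>t p. (mv t (fst p), snd p)) (x, A x)) (at 0)"
      using smooth_hvd[OF base pm_in[OF mv] AN[OF x]] by simp
    have L: "bounded_linear (Lf x)" unfolding Lf_def
      by (intro bounded_linear_sum bounded_linear_compose[OF bounded_linear_scaleR_left bounded_linear_inner_left])
    have unif: "\<exists>S \<delta>. open S \<and> x \<in> S \<and> \<delta> > 0 \<and> (\<forall>x'\<in>S. \<forall>e. norm (e - A x) < \<delta> \<longrightarrow>
       norm (G (x', e) - G (x', A x) - Lf x (e - A x)) \<le> \<epsilon> * norm (e - A x))" if "\<epsilon> > 0" for \<epsilon>
      unfolding Lf_def
    proof (rule unif_lin[OF oN AN[OF x] _ _ that])
      fix b :: 'e assume b: "b \<in> Basis"
      show "continuous_on N (dir_deriv G (\<lambda>t p. (fst p, snd p + t *\<^sub>R b)))"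
        by (rule smooth_cont[OF smooth_dd[OF base em_in[OF b]]])
      fix x' e assume "(x', e) \<in> N"
      from smooth_hvd[OF base em_in[OF b] this]
      show "((\<lambda>t. G (x', e + t *\<^sub>R b)) has_vector_derivative
              dir_deriv G (\<lambda>t p. (fst p, snd p + t *\<^sub>R b)) (x', e)) (at 0)" by simp
    qed
    show ?thesis unfolding DG_def
      by (rule chain_curve[OF gc m0 smooth_hvd[OF sA mv x] _ h1 L unif]) (simp_all add: m0)
  qed
  show ?case
  proof (intro conjI ballI)
    show "continuous_on V (\<lambda>x. G (x, A x))" by (rule cont)
    show "(\<lambda>t. G (mv t x, A (mv t x))) differentiable at 0" if "mv \<in> M" "x \<in> V" for mv x
      by (rule differentiableI_vector[OF hvd[OF that]])
    fix mv assume mv: "mv \<in> M"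
    show "\<exists>F'\<in>KS M V N A. \<forall>x\<in>V. dir_deriv (\<lambda>x. G (x, A x)) mv x = F' x"
    proof (rule bexI[of _ "DG mv"])
      show "\<forall>x\<in>V. dir_deriv (\<lambda>x. G (x, A x)) mv x = DG mv x"
        unfolding dir_deriv_def[of "\<lambda>x. G (x, A x)"] using hvd[OF mv] vector_derivative_at by blast
      have k1: "(\<lambda>x. dir_deriv G (\<lambda>t p. (mv t (fst p), snd p)) (x, A x)) \<in> KS M V N A"
        by (rule KS.base[OF smooth_dd[OF base pm_in[OF mv]]])
      have k2: "(\<lambda>x. \<Sum>b\<in>Basis. (dir_deriv A mv x \<bullet> b) *\<^sub>R
                   dir_deriv G (\<lambda>t p. (fst p, snd p + t *\<^sub>R b)) (x, A x)) \<in> KS M V N A"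
      proof (rule KS_sum[OF finite_Basis])
        fix b :: 'e assume b: "b \<in> Basis"
        have r: "smooth_wrt M V (\<lambda>x. dir_deriv A mv x \<bullet> b)"
          by (rule linear_smooth[OF gm bounded_linear_inner_left smooth_dd[OF sA mv]])
        show "(\<lambda>x. (dir_deriv A mv x \<bullet> b) *\<^sub>R dir_deriv G (\<lambda>t p. (fst p, snd p + t *\<^sub>R b)) (x, A x))
               \<in> KS M V N A"
          by (rule KS.scal[OF r KS.base[OF smooth_dd[OF base em_in[OF b]]]])
      qed
      show "DG mv \<in> KS M V N A"
        by (rule KS.cong[OF KS.add[OF k1 k2]]) (simp add: DG_def Lf_def)
    qed
  qed
next
  case (scal r F)
  have cF: "continuous_on V F" using scal.IH by blast
  have hv: "((\<lambda>t. r (mv t x) *\<^sub>R F (mv t x)) has_vector_derivative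
              r x *\<^sub>R dir_deriv F mv x + dir_deriv r mv x *\<^sub>R F x) (at 0)"
    if mv: "mv \<in> M" and x: "x \<in> V" for mv x
  proof -
    have m0: "mv 0 x = x" using gm mv unfolding good_moves_def by auto
    have dF: "((\<lambda>t. F (mv t x)) has_vector_derivative dir_deriv F mv x) (at 0)"
      using scal.IH mv x unfolding dir_deriv_def by (metis vector_derivative_works)
    have dr: "((\<lambda>t. r (mv t x)) has_real_derivative dir_deriv r mv x) (at 0)"
      using smooth_hvd[OF scal.hyps(1) mv x] by (simp add: has_real_derivative_iff_has_vector_derivative)
    show ?thesis using has_vector_derivative_scaleR[OF dr dF] by (simp add: m0)
  qed
  show ?case
  proof (intro conjI ballI)
    show "continuous_on V (\<lambda>x. r x *\<^sub>R F x)"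
      by (intro continuous_intros smooth_cont[OF scal.hyps(1)] cF)
    show "(\<lambda>t. r (mv t x) *\<^sub>R F (mv t x)) differentiable at 0" if "mv \<in> M" "x \<in> V" for mv x
      by (rule differentiableI_vector[OF hv[OF that]])
    fix mv assume mv: "mv \<in> M"
    obtain F' where F': "F' \<in> KS M V N A" "\<forall>x\<in>V. dir_deriv F mv x = F' x" using scal.IH mv by blast
    show "\<exists>F''\<in>KS M V N A. \<forall>x\<in>V. dir_deriv (\<lambda>x. r x *\<^sub>R F x) mv x = F'' x"
    proof (rule bexI[of _ "\<lambda>x. r x *\<^sub>R F' x + dir_deriv r mv x *\<^sub>R F x"])
      show "\<forall>x\<in>V. dir_deriv (\<lambda>x. r x *\<^sub>R F x) mv x = r x *\<^sub>R F' x + dir_deriv r mv x *\<^sub>R F x"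
        unfolding dir_deriv_def[of "\<lambda>x. r x *\<^sub>R F x"] using hv[OF mv] F'(2) vector_derivative_at by fastforce
      show "(\<lambda>x. r x *\<^sub>R F' x + dir_deriv r mv x *\<^sub>R F x) \<in> KS M V N A"
        by (intro KS.add KS.scal scal.hyps(1) F'(1) smooth_dd[OF scal.hyps(1) mv] scal.hyps(2))
    qed
  qed
next
  case (add F1 F2)
  have hv: "((\<lambda>t. F1 (mv t x) + F2 (mv t x)) has_vector_derivative
              dir_deriv F1 mv x + dir_deriv F2 mv x) (at 0)"
    if mv: "mv \<in> M" and x: "x \<in> V" for mv x
  proof -
    have d1: "((\<lambda>t. F1 (mv t x)) has_vector_derivative dir_deriv F1 mv x) (at 0)"
      using add.IH(1) mv x unfolding dir_deriv_def by (metis vector_derivative_works)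
    have d2: "((\<lambda>t. F2 (mv t x)) has_vector_derivative dir_deriv F2 mv x) (at 0)"
      using add.IH(2) mv x unfolding dir_deriv_def by (metis vector_derivative_works)
    show ?thesis by (rule has_vector_derivative_add[OF d1 d2])
  qed
  show ?case
  proof (intro conjI ballI)
    show "continuous_on V (\<lambda>x. F1 x + F2 x)"
      using add.IH by (intro continuous_intros) blast+
    show "(\<lambda>t. F1 (mv t x) + F2 (mv t x)) differentiable at 0" if "mv \<in> M" "x \<in> V" for mv x
      by (rule differentiableI_vector[OF hv[OF that]])
    fix mv assume mv: "mv \<in> M"
    obtain F1' where F1': "F1' \<in> KS M V N A" "\<forall>x\<in>V. dir_deriv F1 mv x = F1' x" using add.IH mv by blast
    obtain F2' where F2': "F2' \<in> KS M V N A" "\<forall>x\<in>V. dir_deriv F2 mv x = F2' x" using add.IH mv by blast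
    show "\<exists>F''\<in>KS M V N A. \<forall>x\<in>V. dir_deriv (\<lambda>x. F1 x + F2 x) mv x = F'' x"
    proof (rule bexI[of _ "\<lambda>x. F1' x + F2' x"])
      show "\<forall>x\<in>V. dir_deriv (\<lambda>x. F1 x + F2 x) mv x = F1' x + F2' x"
        unfolding dir_deriv_def[of "\<lambda>x. F1 x + F2 x"] using hv[OF mv] F1'(2) F2'(2) vector_derivative_at by fastforce
      show "(\<lambda>x. F1' x + F2' x) \<in> KS M V N A" by (rule KS.add[OF F1'(1) F2'(1)])
    qed
  qed
next
  case zero
  have z: "dir_deriv (\<lambda>x. 0::'b) mv = (\<lambda>x. 0)" for mv :: "real \<Rightarrow> 'x \<Rightarrow> 'x"
    by (rule ext) (simp add: dir_deriv_def)
  show ?case by (auto simp: z intro: KS.zero)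
next
  case (cong F F')
  show ?case
  proof (intro conjI ballI)
    show "continuous_on V F'" using cong.IH cong.hyps(2) continuous_on_cong by force
    show "(\<lambda>t. F' (mv t x)) differentiable at 0" if "mv \<in> M" "x \<in> V" for mv x
      using dd_local(2)[OF gm that(1) oV that(2), of F' F] cong.hyps(2) cong.IH that by blast
    fix mv assume mv: "mv \<in> M"
    obtain F'' where F'': "F'' \<in> KS M V N A" "\<forall>x\<in>V. dir_deriv F mv x = F'' x" using cong.IH mv by blast
    show "\<exists>F''\<in>KS M V N A. \<forall>x\<in>V. dir_deriv F' mv x = F'' x"
      using dd_local(1)[OF gm mv oV, of _ F' F] cong.hyps(2) F'' by metis
  qed
qed

lemma chain_smooth:
  fixes A :: "'x::topological_space \<Rightarrow> 'e::euclidean_space" and G :: "'x \<times> 'e \<Rightarrow> 'b::real_normed_vector"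
  assumes gm: "good_moves M" and oV: "open V" and sA: "smooth_wrt M V A"
    and sG: "smooth_wrt (pmoves M) N G"
    and AN: "\<And>x. x \<in> V \<Longrightarrow> (x, A x) \<in> N"
  shows "smooth_wrt M V (\<lambda>x. G (x, A x))"
  by (rule K_smooth[OF gm oV KS_props[OF gm oV sA AN] KS.base[OF sG]])

lemma cont_coord: "continuous_on S f \<Longrightarrow> continuous_on S (\<lambda>x. f x i)"
  by (rule continuous_on_product_then_coordinatewise)

lemma win_moves_iff:
  "mv \<in> win_moves W \<longleftrightarrow> (\<exists>j b. j \<in> W \<and> b \<in> Basis \<and> mv = (\<lambda>t w. w(j := w j + t *\<^sub>R b)))"
  unfolding win_moves_def by blast

lemma wmv_in: "j \<in> W \<Longrightarrow> b \<in> Basis \<Longrightarrow> (\<lambda>t w. w(j := w j + t *\<^sub>R b)) \<in> win_moves W"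
  unfolding win_moves_def by blast

lemma win_moves_mono: "W \<subseteq> W' \<Longrightarrow> win_moves W \<subseteq> win_moves W'"
  unfolding win_moves_def by blast

lemma good_win: "good_moves (win_moves W :: (real \<Rightarrow> (int \<Rightarrow> 'a::euclidean_space) \<Rightarrow> _) set)"
  unfolding good_moves_def
proof (intro ballI allI conjI)
  fix mv :: "real \<Rightarrow> (int \<Rightarrow> 'a) \<Rightarrow> (int \<Rightarrow> 'a)" and x assume "mv \<in> win_moves W"
  then obtain j b where mv: "mv = (\<lambda>t w. w(j := w j + t *\<^sub>R b))" unfolding win_moves_iff by blast
  show "mv 0 x = x" unfolding mv by simp
  show "continuous_on UNIV (\<lambda>t. mv t x)" unfolding mv
  proof (rule continuous_on_coordinatewise_then_product)
    fix i show "continuous_on UNIV (\<lambda>t. (x(j := x j + t *\<^sub>R b)) i)"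
      by (cases "i = j") (auto intro!: continuous_intros)
  qed
qed

lemma good_euclid: "good_moves (euclid_moves :: (real \<Rightarrow> 'a::euclidean_space \<Rightarrow> 'a) set)"
  unfolding good_moves_def
proof (intro ballI allI conjI)
  fix mv :: "real \<Rightarrow> 'a \<Rightarrow> 'a" and x assume "mv \<in> euclid_moves"
  then obtain b where mv: "mv = (\<lambda>t x. x + t *\<^sub>R b)" unfolding euclid_moves_def by blast
  show "mv 0 x = x" unfolding mv by simp
  show "continuous_on UNIV (\<lambda>t. mv t x)" unfolding mv by (intro continuous_intros)
qed

definition dep :: "int set \<Rightarrow> ((int \<Rightarrow> 'a) \<Rightarrow> 'b) \<Rightarrow> bool" where
  "dep D F \<longleftrightarrow> (\<forall>w w'. (\<forall>j\<in>D. w j = w' j) \<longrightarrow> F w = F w')"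

lemma dep_dd:
  assumes "dep D F"
  shows "dep D (dir_deriv F (\<lambda>t w. w(j := w j + t *\<^sub>R b)))"
  unfolding dep_def
proof (intro allI impI)
  fix w w' :: "int \<Rightarrow> 'a" assume ag: "\<forall>i\<in>D. w i = w' i"
  have "(\<lambda>t. F (w(j := w j + t *\<^sub>R b))) = (\<lambda>t. F (w'(j := w' j + t *\<^sub>R b)))"
  proof (rule ext)
    fix t
    have "\<forall>i\<in>D. (w(j := w j + t *\<^sub>R b)) i = (w'(j := w' j + t *\<^sub>R b)) i"
      using ag by simp
    thus "F (w(j := w j + t *\<^sub>R b)) = F (w'(j := w' j + t *\<^sub>R b))"
      using assms unfolding dep_def by blast
  qed
  thus "dir_deriv F (\<lambda>t w. w(j := w j + t *\<^sub>R b)) w = dir_deriv F (\<lambda>t w. w(j := w j + t *\<^sub>R b)) w'"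
    unfolding dir_deriv_def by simp
qed

lemma dd_out:
  assumes "dep D F" "j \<notin> D"
  shows "dir_deriv F (\<lambda>t w. w(j := w j + t *\<^sub>R b)) = (\<lambda>w. 0)"
proof (rule ext)
  fix w :: "int \<Rightarrow> 'a"
  have "(\<lambda>t. F (w(j := w j + t *\<^sub>R b))) = (\<lambda>t. F w)"
  proof
    fix t
    have "\<forall>i\<in>D. (w(j := w j + t *\<^sub>R b)) i = w i" using assms(2) by auto
    thus "F (w(j := w j + t *\<^sub>R b)) = F w" using assms(1) unfolding dep_def by blast
  qed
  thus "dir_deriv F (\<lambda>t w. w(j := w j + t *\<^sub>R b)) w = 0" unfolding dir_deriv_def by simp
qed

lemma iter_dep:
  fixes F :: "(int \<Rightarrow> 'a::euclidean_space) \<Rightarrow> 'b::real_normed_vector"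
    and mvs :: "(real \<Rightarrow> (int \<Rightarrow> 'a) \<Rightarrow> (int \<Rightarrow> 'a)) list"
  assumes "dep D F" "mvs \<in> lists (win_moves UNIV)"
  shows "dep D (iter_dd F mvs)"
  using assms(2)
proof (induction mvs)
  case Nil thus ?case using assms(1) by simp
next
  case (Cons mv mvs)
  then obtain j b where mv: "mv = (\<lambda>t w. w(j := w j + t *\<^sub>R b))" unfolding win_moves_iff by auto
  thus ?case using dep_dd[OF Cons.IH] by simp
qed

lemma INV:
  fixes F :: "(int \<Rightarrow> 'a::euclidean_space) \<Rightarrow> 'b::real_normed_vector"
  assumes sm: "smooth_wrt (win_moves W) V F" and dp: "dep D F" and DW: "D \<subseteq> W"
  shows "smooth_wrt (win_moves UNIV) V F"
  unfolding smooth_wrt_def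
proof (intro conjI ballI)
  show "open V" by (rule smooth_open[OF sm])
next
  fix mvs :: "(real \<Rightarrow> (int \<Rightarrow> 'a) \<Rightarrow> (int \<Rightarrow> 'a)) list"
  assume mvs: "mvs \<in> lists (win_moves UNIV)"
  have A: "continuous_on V (iter_dd F mvs) \<and>
     (\<forall>mv\<in>win_moves UNIV. \<forall>x\<in>V. (\<lambda>t. iter_dd F mvs (mv t x)) differentiable at 0)"
  proof (cases "mvs \<in> lists (win_moves W)")
    case True
    have c: "continuous_on V (iter_dd F mvs)" using sm True unfolding smooth_wrt_def by blast
    have "(\<lambda>t. iter_dd F mvs (mv t x)) differentiable at 0"
      if mv: "mv \<in> win_moves UNIV" and x: "x \<in> V" for mv :: "real \<Rightarrow> (int \<Rightarrow> 'a) \<Rightarrow> (int \<Rightarrow> 'a)" and x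
    proof -
      obtain j b where jb: "b \<in> Basis" "mv = (\<lambda>t w. w(j := w j + t *\<^sub>R b))"
        using mv unfolding win_moves_iff by blast
      show ?thesis
      proof (cases "j \<in> W")
        case True
        hence "mv \<in> win_moves W" using jb by (simp add: wmv_in)
        thus ?thesis using sm \<open>mvs \<in> lists (win_moves W)\<close> x unfolding smooth_wrt_def by blast
      next
        case False
        hence "j \<notin> D" using DW by blast
        have "(\<lambda>t. iter_dd F mvs (mv t x)) = (\<lambda>t. iter_dd F mvs x)"
        proof
          fix t
          have "\<forall>i\<in>D. (x(j := x j + t *\<^sub>R b)) i = x i" using \<open>j \<notin> D\<close> by auto
          thus "iter_dd F mvs (mv t x) = iter_dd F mvs x"
            using iter_dep[OF dp mvs] unfolding jb(2) dep_def by blast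
        qed
        thus ?thesis by simp
      qed
    qed
    thus ?thesis using c by blast
  next
    case False
    then obtain mv where mv: "mv \<in> set mvs" "mv \<notin> win_moves W" by (auto simp: in_lists_conv_set)
    hence "mv \<in> win_moves UNIV" using mvs by (auto simp: in_lists_conv_set)
    then obtain j b where jb: "b \<in> Basis" "mv = (\<lambda>t w. w(j := w j + t *\<^sub>R b))"
      unfolding win_moves_iff by blast
    have "j \<notin> W"
    proof
      assume "j \<in> W"
      hence "mv \<in> win_moves W" using jb by (simp add: wmv_in)
      with mv(2) show False by simp
    qed
    hence jD: "j \<notin> D" using DW by blast
    obtain xs ys where xy: "mvs = xs @ mv # ys" using mv(1) by (meson split_list)
    have ys: "ys \<in> lists (win_moves UNIV)" using mvs xy by simp
    have "iter_dd F mvs = (\<lambda>x. 0)"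
      unfolding xy iter_dd_append iter_dd.simps(2) jb(2) dd_out[OF iter_dep[OF dp ys] jD] iter_dd_zero ..
    thus ?thesis by simp
  qed
  show "continuous_on V (iter_dd F mvs)" by (rule conjunct1[OF A])
  fix mv :: "real \<Rightarrow> (int \<Rightarrow> 'a) \<Rightarrow> (int \<Rightarrow> 'a)" and x assume mvi: "mv \<in> win_moves UNIV" and xV: "x \<in> V"
  show "(\<lambda>t. iter_dd F mvs (mv t x)) differentiable at 0"
    by (rule bspec[OF bspec[OF conjunct2[OF A] mvi] xV])
qed

lemma refl_smooth:
  fixes F :: "(int \<Rightarrow> 'a::euclidean_space) \<Rightarrow> 'y::real_normed_vector"
  assumes sm: "smooth_wrt (win_moves UNIV) V F"
  shows "smooth_wrt (win_moves UNIV) {w. (\<lambda>i. w (c - i)) \<in> V} (\<lambda>w. F (\<lambda>i. w (c - i)))"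
proof (rule transport[OF sm])
  have ct: "continuous_on UNIV (\<lambda>w::int \<Rightarrow> 'a. (\<lambda>i. w (c - i)))"
    by (intro continuous_on_coordinatewise_then_product) simp
  show "open {w::int \<Rightarrow> 'a. (\<lambda>i. w (c - i)) \<in> V}"
    using open_vimage[OF smooth_open[OF sm] ct] by (simp add: vimage_def)
  show "continuous_on {w. (\<lambda>i. w (c - i)) \<in> V} (\<lambda>w. (\<lambda>i. w (c - i)))"
    by (rule continuous_on_subset[OF ct]) simp
  show "(\<lambda>w. (\<lambda>i. w (c - i))) ` {w. (\<lambda>i. w (c - i)) \<in> V} \<subseteq> V" by auto
  fix mv' :: "real \<Rightarrow> (int \<Rightarrow> 'a) \<Rightarrow> (int \<Rightarrow> 'a)" assume "mv' \<in> win_moves UNIV"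
  then obtain j b where jb: "b \<in> Basis" "mv' = (\<lambda>t w. w(j := w j + t *\<^sub>R b))"
    unfolding win_moves_iff by blast
  show "\<exists>mv\<in>win_moves UNIV. \<forall>t x. (\<lambda>i. mv' t x (c - i)) = mv t (\<lambda>i. x (c - i))"
  proof (rule bexI[of _ "\<lambda>t w. w(c - j := w (c - j) + t *\<^sub>R b)"])
    show "\<forall>t x. (\<lambda>i. mv' t x (c - i)) = (\<lambda>t w. w(c - j := w (c - j) + t *\<^sub>R b)) t (\<lambda>i. x (c - i))"
      unfolding jb(2) by (auto simp: fun_eq_iff)
    show "(\<lambda>t w. w(c - j := w (c - j) + t *\<^sub>R b)) \<in> win_moves UNIV" by (rule wmv_in[OF UNIV_I jb(1)])
  qed
qed

definition Rm :: "(int \<Rightarrow> 'a \<times> 'b \<times> 'c) \<Rightarrow> int \<Rightarrow> 'c \<times> 'b \<times> 'a" where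
  "Rm s = (\<lambda>i. (snd (snd (s (-i))), fst (snd (s (1 - i))), fst (s (-i))))"

definition Th :: "(int \<Rightarrow> 'a \<times> 'b \<times> 'c) \<times> ('b \<times> 'a) \<Rightarrow> int \<Rightarrow> 'c \<times> 'b \<times> 'a" where
  "Th p = (Rm (fst p))(0 := (snd (snd (fst p 0)), snd p))"

definition Pr :: "(int \<Rightarrow> 'a \<times> 'b \<times> 'c) \<Rightarrow> 'b \<times> 'c" where
  "Pr s = (fst (snd (s 0)), snd (snd (s 0)))"

lemma basis_triple:
  "b \<in> (Basis :: ('a::euclidean_space \<times> 'b::euclidean_space \<times> 'c::euclidean_space) set) \<Longrightarrow>
    (\<exists>b1\<in>Basis. b = (b1, 0, 0)) \<or> (\<exists>b2\<in>Basis. b = (0, b2, 0)) \<or> (\<exists>b3\<in>Basis. b = (0, 0, b3))"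
  by (auto simp: Basis_prod_def zero_prod_def)

lemma basis_triple_in:
  "b1 \<in> Basis \<Longrightarrow> (b1, 0, 0) \<in> (Basis :: ('a::euclidean_space \<times> 'b::euclidean_space \<times> 'c::euclidean_space) set)"
  "b2 \<in> Basis \<Longrightarrow> (0, b2, 0) \<in> (Basis :: ('a::euclidean_space \<times> 'b::euclidean_space \<times> 'c::euclidean_space) set)"
  "b3 \<in> Basis \<Longrightarrow> (0, 0, b3) \<in> (Basis :: ('a::euclidean_space \<times> 'b::euclidean_space \<times> 'c::euclidean_space) set)"
  "v \<in> Basis \<Longrightarrow> (0, v) \<in> (Basis :: ('a::euclidean_space \<times> 'b::euclidean_space \<times> 'c::euclidean_space) set)"
  "b1 \<in> Basis \<Longrightarrow> (b1, 0) \<in> (Basis :: ('a::euclidean_space \<times> 'b::euclidean_space) set)"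
  "b2 \<in> Basis \<Longrightarrow> (0, b2) \<in> (Basis :: ('a::euclidean_space \<times> 'b::euclidean_space) set)"
  by (auto simp: Basis_prod_def zero_prod_def)

lemma Th_cont: "continuous_on UNIV (Th :: (int \<Rightarrow> 'a::topological_space \<times> 'b::topological_space \<times> 'c::topological_space) \<times> ('b \<times> 'a) \<Rightarrow> _)"
proof (rule continuous_on_coordinatewise_then_product)
  have c1: "continuous_on UNIV (\<lambda>p::(int \<Rightarrow> 'a \<times> 'b \<times> 'c) \<times> ('b \<times> 'a). fst p k)" for k
    by (rule cont_coord[OF continuous_on_fst[OF continuous_on_id]])
  fix i
  show "continuous_on UNIV (\<lambda>p::(int \<Rightarrow> 'a \<times> 'b \<times> 'c) \<times> ('b \<times> 'a). Th p i)"
  proof (cases "i = 0")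
    case True
    thus ?thesis unfolding Th_def by simp (intro continuous_intros c1)
  next
    case False
    thus ?thesis unfolding Th_def Rm_def by simp (intro continuous_intros c1)
  qed
qed

lemma Pr_cont: "continuous_on S (Pr :: (int \<Rightarrow> 'a::topological_space \<times> 'b::topological_space \<times> 'c::topological_space) \<Rightarrow> _)"
proof -
  have c1: "continuous_on S (\<lambda>s::int \<Rightarrow> 'a \<times> 'b \<times> 'c. s k)" for k
    by (rule cont_coord[OF continuous_on_id])
  show ?thesis unfolding Pr_def by (intro continuous_intros c1)
qed

lemma Th_moves:
  fixes mv' :: "real \<Rightarrow> (int \<Rightarrow> 'a::euclidean_space \<times> 'b::euclidean_space \<times> 'c::euclidean_space) \<times> ('b \<times> 'a) \<Rightarrow> _"
  assumes "mv' \<in> pmoves (win_moves UNIV)"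
  shows "(\<forall>t p. Th (mv' t p) = Th p) \<or> (\<exists>mv\<in>win_moves UNIV. \<forall>t p. Th (mv' t p) = mv t (Th p))"
proof -
  from assms consider (pm) j b where "b \<in> Basis" "mv' = (\<lambda>t p. ((fst p)(j := fst p j + t *\<^sub>R b), snd p))"
    | (em) b where "b \<in> Basis" "mv' = (\<lambda>t p. (fst p, snd p + t *\<^sub>R b))"
    unfolding pmoves_def win_moves_def by blast
  thus ?thesis
  proof cases
    case (pm j b)
    from basis_triple[OF pm(1)] consider (s1) b1 where "b1 \<in> Basis" "b = (b1, 0, 0)"
      | (s2) b2 where "b2 \<in> Basis" "b = (0, b2, 0)" | (s3) b3 where "b3 \<in> Basis" "b = (0, 0, b3)" by blast
    thus ?thesis
    proof cases
      case s1
      show ?thesis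
      proof (cases "j = 0")
        case True thus ?thesis unfolding pm(2) s1(2) by (auto simp: Th_def Rm_def fun_eq_iff zero_prod_def)
      next
        case False
        show ?thesis
          apply (rule disjI2, rule bexI[of _ "\<lambda>t w. w(-j := w (-j) + t *\<^sub>R (0, 0, b1))"])
          using False unfolding pm(2) s1(2) apply (auto simp: Th_def Rm_def fun_eq_iff zero_prod_def)[1]
          by (rule wmv_in[OF UNIV_I basis_triple_in(3)[OF s1(1)]])
      qed
    next
      case s2
      show ?thesis
      proof (cases "j = 1")
        case True thus ?thesis unfolding pm(2) s2(2) by (auto simp: Th_def Rm_def fun_eq_iff zero_prod_def)
      next
        case False
        show ?thesis
          apply (rule disjI2, rule bexI[of _ "\<lambda>t w. w(1 - j := w (1 - j) + t *\<^sub>R (0, b2, 0))"])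
          using False unfolding pm(2) s2(2) apply (auto simp: Th_def Rm_def fun_eq_iff zero_prod_def)[1]
          by (rule wmv_in[OF UNIV_I basis_triple_in(2)[OF s2(1)]])
      qed
    next
      case s3
      show ?thesis
        apply (rule disjI2, rule bexI[of _ "\<lambda>t w. w(-j := w (-j) + t *\<^sub>R (b3, 0, 0))"])
        unfolding pm(2) s3(2) apply (auto simp: Th_def Rm_def fun_eq_iff zero_prod_def)[1]
        by (rule wmv_in[OF UNIV_I basis_triple_in(1)[OF s3(1)]])
    qed
  next
    case (em b)
    show ?thesis
      apply (rule disjI2, rule bexI[of _ "\<lambda>t w. w(0 := w 0 + t *\<^sub>R (0, b))"])
      unfolding em(2) apply (auto simp: Th_def Rm_def fun_eq_iff zero_prod_def)[1]
      by (rule wmv_in[OF UNIV_I basis_triple_in(4)[OF em(1)]])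
  qed
qed

lemma Pr_moves:
  fixes mv' :: "real \<Rightarrow> (int \<Rightarrow> 'a::euclidean_space \<times> 'b::euclidean_space \<times> 'c::euclidean_space) \<Rightarrow> _"
  assumes "mv' \<in> win_moves UNIV"
  shows "(\<forall>t p. Pr (mv' t p) = Pr p) \<or> (\<exists>mv\<in>euclid_moves. \<forall>t p. Pr (mv' t p) = mv t (Pr p))"
proof -
  from assms obtain j b where jb: "b \<in> Basis" "mv' = (\<lambda>t w. w(j := w j + t *\<^sub>R b))"
    unfolding win_moves_iff by blast
  show ?thesis
  proof (cases "j = 0")
    case False thus ?thesis unfolding jb(2) by (auto simp: Pr_def)
  next
    case True
    from basis_triple[OF jb(1)] consider (s1) b1 where "b1 \<in> Basis" "b = (b1, 0, 0)"
      | (s2) b2 where "b2 \<in> Basis" "b = (0, b2, 0)" | (s3) b3 where "b3 \<in> Basis" "b = (0, 0, b3)" by blast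
    thus ?thesis
    proof cases
      case s1 thus ?thesis unfolding jb(2) True by (auto simp: Pr_def)
    next
      case s2
      show ?thesis
        apply (rule disjI2, rule bexI[of _ "\<lambda>t x. x + t *\<^sub>R (b2, 0)"])
        unfolding jb(2) True s2(2) apply (auto simp: Pr_def prod_eq_iff)[1]
        unfolding euclid_moves_def using basis_triple_in(5)[OF s2(1)] by blast
    next
      case s3
      show ?thesis
        apply (rule disjI2, rule bexI[of _ "\<lambda>t x. x + t *\<^sub>R (0, b3)"])
        unfolding jb(2) True s3(2) apply (auto simp: Pr_def prod_eq_iff)[1]
        unfolding euclid_moves_def using basis_triple_in(6)[OF s3(1)] by blast
    qed
  qed
qed

lemma smooth_on_open: "smooth_on Ob H \<Longrightarrow> open Ob"
  unfolding smooth_on_def by (rule smooth_open)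

lemma Theta_smooth:
  fixes \<Phi> :: "(int \<Rightarrow> 'c::euclidean_space \<times> 'b::euclidean_space \<times> 'a::euclidean_space) \<Rightarrow> 'y::real_normed_vector"
    and H :: "'b \<times> 'c \<Rightarrow> 'b \<times> 'a"
  assumes s\<Phi>: "smooth_wrt (win_moves UNIV) U \<Phi>" and sH: "smooth_on Ob H"
  shows "smooth_wrt (win_moves UNIV) {s::int \<Rightarrow> 'a \<times> 'b \<times> 'c. Pr s \<in> Ob \<and> Th (s, H (Pr s)) \<in> U}
           (\<lambda>s. \<Phi> (Th (s, H (Pr s))))"
proof -
  have oU: "open U" by (rule smooth_open[OF s\<Phi>])
  have oO: "open Ob" by (rule smooth_on_open[OF sH])
  define D where "D = {s::int \<Rightarrow> 'a \<times> 'b \<times> 'c. Pr s \<in> Ob}"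
  have oD: "open D" unfolding D_def using open_vimage[OF oO Pr_cont] by (simp add: vimage_def)
  have sA: "smooth_wrt (win_moves UNIV) D (\<lambda>s. H (Pr s))"
  proof (rule transport0[OF sH[unfolded smooth_on_def] oD Pr_cont])
    show "Pr ` D \<subseteq> Ob" unfolding D_def by auto
    fix mv' :: "real \<Rightarrow> (int \<Rightarrow> 'a \<times> 'b \<times> 'c) \<Rightarrow> _" assume "mv' \<in> win_moves UNIV"
    thus "(\<forall>t x. Pr (mv' t x) = Pr x) \<or> (\<exists>mv\<in>euclid_moves. \<forall>t x. Pr (mv' t x) = mv t (Pr x))"
      by (rule Pr_moves)
  qed
  define N where "N = {p::(int \<Rightarrow> 'a \<times> 'b \<times> 'c) \<times> ('b \<times> 'a). Th p \<in> U}"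
  have oN: "open N" unfolding N_def using open_vimage[OF oU Th_cont] by (simp add: vimage_def)
  have sG: "smooth_wrt (pmoves (win_moves UNIV)) N (\<lambda>p. \<Phi> (Th p))"
  proof (rule transport0[OF s\<Phi> oN continuous_on_subset[OF Th_cont subset_UNIV]])
    show "Th ` N \<subseteq> U" unfolding N_def by auto
    fix mv' :: "real \<Rightarrow> (int \<Rightarrow> 'a \<times> 'b \<times> 'c) \<times> ('b \<times> 'a) \<Rightarrow> _" assume "mv' \<in> pmoves (win_moves UNIV)"
    thus "(\<forall>t x. Th (mv' t x) = Th x) \<or> (\<exists>mv\<in>win_moves UNIV. \<forall>t x. Th (mv' t x) = mv t (Th x))"
      by (rule Th_moves)
  qed
  define V where "V = {s::int \<Rightarrow> 'a \<times> 'b \<times> 'c. Pr s \<in> Ob \<and> Th (s, H (Pr s)) \<in> U}"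
  have cV: "continuous_on D (\<lambda>s. Th (s, H (Pr s)))"
    by (rule continuous_on_compose2[OF Th_cont continuous_on_Pair[OF continuous_on_id smooth_cont[OF sA]] subset_UNIV])
  have "open ((\<lambda>s. Th (s, H (Pr s))) -` U \<inter> D)"
    using cV oD oU by (simp add: continuous_on_open_vimage)
  moreover have "(\<lambda>s. Th (s, H (Pr s))) -` U \<inter> D = V" unfolding V_def D_def by auto
  ultimately have oV: "open V" by simp
  have "smooth_wrt (win_moves UNIV) V (\<lambda>s. (\<lambda>p. \<Phi> (Th p)) (s, H (Pr s)))"
  proof (rule chain_smooth[OF good_win oV _ sG])
    show "smooth_wrt (win_moves UNIV) V (\<lambda>s. H (Pr s))"
      by (rule smooth_mono[OF sA subset_refl oV]) (auto simp: V_def D_def)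
    show "\<And>x. x \<in> V \<Longrightarrow> (x, H (Pr x)) \<in> N" unfolding V_def N_def by auto
  qed
  thus ?thesis unfolding V_def by simp
qed

lemma outer_smooth:
  fixes A :: "'x::topological_space \<Rightarrow> 'e::euclidean_space" and g :: "'e \<Rightarrow> 'y::real_normed_vector"
  assumes gm: "good_moves M" and sA: "smooth_wrt M V A" and sg: "smooth_on Ob g"
    and AO: "\<And>x. x \<in> V \<Longrightarrow> A x \<in> Ob"
  shows "smooth_wrt M V (\<lambda>x. g (A x))"
proof -
  have oO: "open Ob" by (rule smooth_on_open[OF sg])
  have sG: "smooth_wrt (pmoves M) (UNIV \<times> Ob) (\<lambda>p. g (snd p))"
  proof (rule transport0[OF sg[unfolded smooth_on_def] open_Times[OF open_UNIV oO] continuous_on_snd[OF continuous_on_id]])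
    show "snd ` (UNIV \<times> Ob) \<subseteq> Ob" by auto
    fix mv' :: "real \<Rightarrow> 'x \<times> 'e \<Rightarrow> 'x \<times> 'e" assume "mv' \<in> pmoves M"
    then consider (pm) mv where "mv' = (\<lambda>t p. (mv t (fst p), snd p))"
      | (em) b where "b \<in> Basis" "mv' = (\<lambda>t p. (fst p, snd p + t *\<^sub>R b))"
      unfolding pmoves_def by blast
    thus "(\<forall>t x. snd (mv' t x) = snd x) \<or> (\<exists>mv\<in>euclid_moves. \<forall>t x. snd (mv' t x) = mv t (snd x))"
    proof cases
      case pm thus ?thesis by simp
    next
      case (em b)
      show ?thesis
        apply (rule disjI2, rule bexI[of _ "\<lambda>t x. x + t *\<^sub>R b"])
        unfolding em(2) euclid_moves_def using em(1) by auto
    qed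
  qed
  have "smooth_wrt M V (\<lambda>x. (\<lambda>p. g (snd p)) (x, A x))"
    by (rule chain_smooth[OF gm smooth_open[OF sA] sA sG]) (use AO in auto)
  thus ?thesis by simp
qed

lemma shift_apply: "shift k s j = s (k + j)" by (simp add: shift_def)
lemma sig_apply: "sig G x u k = (G (x k) (u k), x k, u k)" by (simp add: sig_def)

lemma KI:
  fixes z :: "int \<Rightarrow> 'b" and v :: "int \<Rightarrow> 'c" and x :: "int \<Rightarrow> 'b" and u :: "int \<Rightarrow> 'a"
    and psi_x :: "'b \<Rightarrow> 'c \<Rightarrow> 'b" and psi_u :: "'b \<Rightarrow> 'c \<Rightarrow> 'a" and g :: "'b \<Rightarrow> 'a \<Rightarrow> 'c"
  assumes h1: "\<And>j. x j = z (1 - j)" and h2: "\<And>j. u j = psi_u (z (-j)) (v (-j))"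
    and h3: "\<And>j. g (x j) (u j) = v (-j)" and h4: "\<And>j. psi_x (z j) (v j) = z (j + 1)"
  shows "Th (shift k (sig psi_u z v), (\<lambda>(a, b). (psi_x a b, psi_u a b)) (Pr (shift k (sig psi_u z v))))
         = shift (-k) (sig g x u)"
proof (rule ext)
  fix i
  show "Th (shift k (sig psi_u z v), (\<lambda>(a, b). (psi_x a b, psi_u a b)) (Pr (shift k (sig psi_u z v)))) i
         = shift (-k) (sig g x u) i"
  proof (cases "i = 0")
    case True
    have "g (x (-k)) (u (-k)) = v k" using h3[of "-k"] by simp
    moreover have "x (-k) = z (k + 1)" using h1[of "-k"] by (simp add: add.commute)
    moreover have "u (-k) = psi_u (z k) (v k)" using h2[of "-k"] by simp
    ultimately show ?thesis using True h4[of k]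
      by (simp add: Th_def Pr_def shift_apply sig_apply)
  next
    case False
    have "g (x (i - k)) (u (i - k)) = v (k - i)" using h3[of "i - k"] by simp
    moreover have "x (i - k) = z (k + (1 - i))" using h1[of "i - k"] by (simp add: algebra_simps)
    moreover have "u (i - k) = psi_u (z (k - i)) (v (k - i))" using h2[of "i - k"] by simp
    ultimately show ?thesis using False
      by (simp add: Th_def Rm_def Pr_def shift_apply sig_apply algebra_simps)
  qed
qed

lemma flat_withE:
  assumes "flat_with F G x0 u0 phi Fx Fu"
  obtains Q1 Q2 R1 R2 U V where
    "\<forall>s s'. (\<forall>j \<in> {- int Q1 .. -1}. fst (s j) = fst (s' j))
              \<and> fst (snd (s 0)) = fst (snd (s' 0))
              \<and> (\<forall>j \<in> {0 .. int Q2}. snd (snd (s j)) = snd (snd (s' j)))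
              \<longrightarrow> phi s = phi s'"
    "\<forall>w w'. (\<forall>j \<in> {- int R1 .. int R2 - 1}. w j = w' j) \<longrightarrow> Fx w = Fx w'"
    "\<forall>w w'. (\<forall>j \<in> {- int R1 .. int R2}. w j = w' j) \<longrightarrow> Fu w = Fu w'"
    "(\<lambda>j. (G x0 u0, x0, u0)) \<in> U"
    "smooth_wrt (win_moves {- int Q1 .. int Q2}) U phi"
    "(\<lambda>j. phi (\<lambda>i. (G x0 u0, x0, u0))) \<in> V"
    "smooth_wrt (win_moves {- int R1 .. int R2}) V Fx"
    "smooth_wrt (win_moves {- int R1 .. int R2}) V Fu"
    "\<forall>x u. traj F x u \<and> (\<forall>k. shift k (sig G x u) \<in> U) \<longrightarrow>
         (let y = (\<lambda>k. phi (shift k (sig G x u)))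
          in (\<forall>k. shift k y \<in> V) \<and> (\<forall>k. x k = Fx (shift k y) \<and> u k = Fu (shift k y)))"
    "\<forall>y. (\<forall>k. shift k y \<in> V) \<longrightarrow>
         (let x = (\<lambda>k. Fx (shift k y)); u = (\<lambda>k. Fu (shift k y))
          in traj F x u \<and> (\<forall>k. shift k (sig G x u) \<in> U) \<and>
             (\<forall>k. phi (shift k (sig G x u)) = y k))"
  using assms unfolding flat_with_def by (elim exE conjE) (rule that)

lemma flat_withI:
  assumes
    "\<forall>s s'. (\<forall>j \<in> {- int Q1 .. -1}. fst (s j) = fst (s' j))
              \<and> fst (snd (s 0)) = fst (snd (s' 0))
              \<and> (\<forall>j \<in> {0 .. int Q2}. snd (snd (s j)) = snd (snd (s' j)))
              \<longrightarrow> phi s = phi s'"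
    "\<forall>w w'. (\<forall>j \<in> {- int R1 .. int R2 - 1}. w j = w' j) \<longrightarrow> Fx w = Fx w'"
    "\<forall>w w'. (\<forall>j \<in> {- int R1 .. int R2}. w j = w' j) \<longrightarrow> Fu w = Fu w'"
    "(\<lambda>j. (G x0 u0, x0, u0)) \<in> U"
    "smooth_wrt (win_moves {- int Q1 .. int Q2}) U phi"
    "(\<lambda>j. phi (\<lambda>i. (G x0 u0, x0, u0))) \<in> V"
    "smooth_wrt (win_moves {- int R1 .. int R2}) V Fx"
    "smooth_wrt (win_moves {- int R1 .. int R2}) V Fu"
    "\<forall>x u. traj F x u \<and> (\<forall>k. shift k (sig G x u) \<in> U) \<longrightarrow>
         (let y = (\<lambda>k. phi (shift k (sig G x u)))
          in (\<forall>k. shift k y \<in> V) \<and> (\<forall>k. x k = Fx (shift k y) \<and> u k = Fu (shift k y)))"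
    "\<forall>y. (\<forall>k. shift k y \<in> V) \<longrightarrow>
         (let x = (\<lambda>k. Fx (shift k y)); u = (\<lambda>k. Fu (shift k y))
          in traj F x u \<and> (\<forall>k. shift k (sig G x u) \<in> U) \<and>
             (\<forall>k. phi (shift k (sig G x u)) = y k))"
  shows "flat_with F G x0 u0 phi Fx Fu"
  unfolding flat_with_def
  by (rule exI[of _ Q1], rule exI[of _ Q2], rule exI[of _ R1], rule exI[of _ R2], rule exI[of _ U],
      rule exI[of _ V]) (intro conjI assms)

lemma Fz_eq: "param_z Fx = (\<lambda>w. Fx (\<lambda>i. w (-1 - i)))"
proof -
  have "(\<lambda>j. w (- j - 1)) = (\<lambda>i. w (-1 - i))" for w :: "int \<Rightarrow> 'a"
    by (rule ext) (rule arg_cong[where f=w], simp)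
  thus ?thesis unfolding param_z_def by simp
qed

lemma Fv_eq: "param_v g Fx Fu = (\<lambda>w. (\<lambda>(x, u). g x u) (Fx (\<lambda>i. w (- i)), Fu (\<lambda>i. w (- i))))"
  by (simp add: param_v_def)

lemma rsh1: "(\<lambda>i. shift k (\<lambda>k. y (- k)) (- i)) = shift (- k) y"
  by (simp add: shift_def fun_eq_iff algebra_simps)
lemma rsh2: "(\<lambda>i. shift k (\<lambda>k. y (- k)) (-1 - i)) = shift (1 - k) y"
  by (simp add: shift_def fun_eq_iff algebra_simps)
lemma rsh3: "(\<lambda>i. shift (-k) Y (- i)) = shift k (\<lambda>k. Y (- k))"
  by (simp add: shift_def fun_eq_iff algebra_simps)
lemma rsh4: "(\<lambda>i. shift k Y (-1 - i)) = shift (1 - k) (\<lambda>k. Y (- k))"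
  by (simp add: shift_def fun_eq_iff algebra_simps)
lemma rsh5: "(\<lambda>i. shift k Y (- i)) = shift (- k) (\<lambda>k. Y (- k))"
  by (simp add: shift_def fun_eq_iff algebra_simps)

lemma refl_smooth0:
  fixes F :: "(int \<Rightarrow> 'a::euclidean_space) \<Rightarrow> 'y::real_normed_vector"
  assumes sm: "smooth_wrt (win_moves UNIV) V F"
  shows "smooth_wrt (win_moves UNIV) {w. (\<lambda>i. w (- i)) \<in> V} (\<lambda>w. F (\<lambda>i. w (- i)))"
  using refl_smooth[OF sm, of 0] by simp

lemma dep_from:
  assumes "\<forall>w w'. (\<forall>j\<in>D. w j = w' j) \<longrightarrow> F w = F w'"
  shows "dep D F"
  using assms unfolding dep_def by blast

lemma dir1:
  fixes f :: "real^'n \<Rightarrow> real^'m \<Rightarrow> real^'n"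
    and g :: "real^'n \<Rightarrow> real^'m \<Rightarrow> real^'m"
    and psi_x :: "real^'n \<Rightarrow> real^'m \<Rightarrow> real^'n"
    and psi_u :: "real^'n \<Rightarrow> real^'m \<Rightarrow> real^'m"
    and x0 :: "real^'n" and u0 :: "real^'m"
    and A B :: "((real^'n) \<times> (real^'m)) set"
    and phi :: "(int \<Rightarrow> (real^'m) \<times> (real^'n) \<times> (real^'m)) \<Rightarrow> real^'m"
    and Fx :: "(int \<Rightarrow> real^'m) \<Rightarrow> real^'n" and Fu :: "(int \<Rightarrow> real^'m) \<Rightarrow> real^'m"
  assumes g_smooth: "smooth_on UNIV (\<lambda>(x, u). g x u)"
    and equil: "f x0 u0 = x0"
    and x0u0_A: "(x0, u0) \<in> A"
    and fg_image: "(\<lambda>(x, u). (f x u, g x u)) ` A = B"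
    and psi_left: "\<And>x u. (x, u) \<in> A \<Longrightarrow> psi_x (f x u) (g x u) = x \<and> psi_u (f x u) (g x u) = u"
    and psi_right: "\<And>z v. (z, v) \<in> B \<Longrightarrow> f (psi_x z v) (psi_u z v) = z \<and> g (psi_x z v) (psi_u z v) = v"
    and psi_smooth: "smooth_on B (\<lambda>(z, v). (psi_x z v, psi_u z v))"
    and A_open: "open A"
    and dphi: "\<forall>s s'. (\<forall>j \<in> {- int Q1 .. -1}. fst (s j) = fst (s' j))
              \<and> fst (snd (s 0)) = fst (snd (s' 0))
              \<and> (\<forall>j \<in> {0 .. int Q2}. snd (snd (s j)) = snd (snd (s' j)))
              \<longrightarrow> phi s = phi s'"
    and dFx: "\<forall>w w'. (\<forall>j \<in> {- int R1 .. int R2 - 1}. w j = w' j) \<longrightarrow> Fx w = Fx w'"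
    and dFu: "\<forall>w w'. (\<forall>j \<in> {- int R1 .. int R2}. w j = w' j) \<longrightarrow> Fu w = Fu w'"
    and U0: "(\<lambda>j. (g x0 u0, x0, u0)) \<in> U"
    and sphi: "smooth_wrt (win_moves {- int Q1 .. int Q2}) U phi"
    and V0: "(\<lambda>j. phi (\<lambda>i. (g x0 u0, x0, u0))) \<in> V"
    and sFx: "smooth_wrt (win_moves {- int R1 .. int R2}) V Fx"
    and sFu: "smooth_wrt (win_moves {- int R1 .. int R2}) V Fu"
    and fwd: "\<forall>x u. traj f x u \<and> (\<forall>k. shift k (sig g x u) \<in> U) \<longrightarrow>
         (let y = (\<lambda>k. phi (shift k (sig g x u)))
          in (\<forall>k. shift k y \<in> V) \<and> (\<forall>k. x k = Fx (shift k y) \<and> u k = Fu (shift k y)))"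
    and bwd: "\<forall>y. (\<forall>k. shift k y \<in> V) \<longrightarrow>
         (let x = (\<lambda>k. Fx (shift k y)); u = (\<lambda>k. Fu (shift k y))
          in traj f x u \<and> (\<forall>k. shift k (sig g x u) \<in> U) \<and>
             (\<forall>k. phi (shift k (sig g x u)) = y k))"
  shows "flat_with psi_x psi_u x0 (g x0 u0) (subst_out psi_x psi_u phi) (param_z Fx) (param_v g Fx Fu)"
proof -
  define psi' where "psi' = (\<lambda>(a::real^'n, b::real^'m). (psi_x a b, psi_u a b))"
  have psi_smooth': "smooth_on B psi'" unfolding psi'_def by (rule psi_smooth)
  define phih where "phih = subst_out psi_x psi_u phi"
  define U' where "U' = {s::int \<Rightarrow> (real^'m) \<times> (real^'n) \<times> (real^'m). Pr s \<in> B \<and> Th (s, psi' (Pr s)) \<in> U}"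
  define V' where "V' = {w::int \<Rightarrow> real^'m. (\<lambda>i. w (- i)) \<in> V \<and> (\<lambda>i. w (-1 - i)) \<in> V \<and>
                          (Fx (\<lambda>i. w (- i)), Fu (\<lambda>i. w (- i))) \<in> A}"
  have psiB: "(psi_x z v, psi_u z v) \<in> A" if zvB0: "(z, v) \<in> B" for z v
  proof -
    obtain a b where ab: "(a, b) \<in> A" "z = f a b" "v = g a b" using zvB0 fg_image by force
    thus ?thesis using psi_left[OF ab(1)] by simp
  qed
  have fgB: "(f x u, g x u) \<in> B" if "(x, u) \<in> A" for x u using that fg_image by force
  have psi0: "psi_x x0 (g x0 u0) = x0" "psi_u x0 (g x0 u0) = u0"
    using psi_left[OF x0u0_A] equil by auto

  have sphiF: "smooth_wrt (win_moves UNIV) U phi"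
  proof (rule INV[OF sphi _ subset_refl])
    show "dep {- int Q1..int Q2} phi" unfolding dep_def
    proof (intro allI impI)
      fix w w' :: "int \<Rightarrow> (real^'m) \<times> (real^'n) \<times> (real^'m)" assume ag: "\<forall>j\<in>{- int Q1..int Q2}. w j = w' j"
      show "phi w = phi w'" by (rule dphi[rule_format]) (use ag in auto)
    qed
  qed
  have sFxF: "smooth_wrt (win_moves UNIV) V Fx"
    by (rule INV[OF sFx dep_from[OF dFx]]) auto
  have sFuF: "smooth_wrt (win_moves UNIV) V Fu"
    by (rule INV[OF sFu dep_from[OF dFu] subset_refl])

  have phih_eq: "phih = (\<lambda>s. phi (Th (s, psi' (Pr s))))"
  proof (rule ext)
    fix s :: "int \<Rightarrow> (real^'m) \<times> (real^'n) \<times> (real^'m)"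
    show "phih s = phi (Th (s, psi' (Pr s)))"
      unfolding phih_def subst_out_def
      by (rule dphi[rule_format]) (auto simp: Th_def Rm_def Pr_def psi'_def split_beta)
  qed
  have sphihF: "smooth_wrt (win_moves UNIV) U' phih"
    unfolding phih_eq U'_def by (rule Theta_smooth[OF sphiF psi_smooth'])
  have oU': "open U'" by (rule smooth_open[OF sphihF])
  have sphih: "smooth_wrt (win_moves {- int Q2..int Q1}) U' phih"
    by (rule smooth_mono[OF sphihF win_moves_mono[OF subset_UNIV] oU' subset_refl])
  have dphih: "\<forall>s s'. (\<forall>j \<in> {- int Q2 .. -1}. fst (s j) = fst (s' j))
              \<and> fst (snd (s 0)) = fst (snd (s' 0))
              \<and> (\<forall>j \<in> {0 .. int Q1}. snd (snd (s j)) = snd (snd (s' j)))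
              \<longrightarrow> phih s = phih s'"
  proof (intro allI impI)
    fix s s' :: "int \<Rightarrow> (real^'m) \<times> (real^'n) \<times> (real^'m)"
    assume H: "(\<forall>j \<in> {- int Q2 .. -1}. fst (s j) = fst (s' j))
              \<and> fst (snd (s 0)) = fst (snd (s' 0))
              \<and> (\<forall>j \<in> {0 .. int Q1}. snd (snd (s j)) = snd (snd (s' j)))"
    have H1: "fst (s j) = fst (s' j)" if "j \<in> {- int Q2 .. -1}" for j using H that by blast
    have H2: "snd (snd (s j)) = snd (snd (s' j))" if "j \<in> {0 .. int Q1}" for j using H that by blast
    have H3: "fst (snd (s 0)) = fst (snd (s' 0))" using H by blast
    show "phih s = phih s'"
      unfolding phih_def subst_out_def
    proof (rule dphi[rule_format], intro conjI ballI)
      fix j assume "j \<in> {- int Q1..-1}"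
      hence "- j \<in> {0 .. int Q1}" by auto
      thus "fst (snd (snd (s (- j))), psi_x (fst (snd (s (- j)))) (snd (snd (s (- j)))),
              if j = 0 then psi_u (fst (snd (s 0))) (snd (snd (s 0))) else fst (s (- j))) =
            fst (snd (snd (s' (- j))), psi_x (fst (snd (s' (- j)))) (snd (snd (s' (- j)))),
              if j = 0 then psi_u (fst (snd (s' 0))) (snd (snd (s' 0))) else fst (s' (- j)))"
        using H2 by simp
    next
      have "snd (snd (s 0)) = snd (snd (s' 0))" using H2[of 0] by simp
      thus "fst (snd (snd (snd (s (- 0))), psi_x (fst (snd (s (- 0)))) (snd (snd (s (- 0)))),
              if 0 = (0::int) then psi_u (fst (snd (s 0))) (snd (snd (s 0))) else fst (s (- 0)))) =
            fst (snd (snd (snd (s' (- 0))), psi_x (fst (snd (s' (- 0)))) (snd (snd (s' (- 0)))),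
              if 0 = (0::int) then psi_u (fst (snd (s' 0))) (snd (snd (s' 0))) else fst (s' (- 0))))"
        using H3 by simp
    next
      fix j assume j: "j \<in> {0..int Q2}"
      show "snd (snd (snd (snd (s (- j))), psi_x (fst (snd (s (- j)))) (snd (snd (s (- j)))),
              if j = 0 then psi_u (fst (snd (s 0))) (snd (snd (s 0))) else fst (s (- j)))) =
            snd (snd (snd (snd (s' (- j))), psi_x (fst (snd (s' (- j)))) (snd (snd (s' (- j)))),
              if j = 0 then psi_u (fst (snd (s' 0))) (snd (snd (s' 0))) else fst (s' (- j))))"
      proof (cases "j = 0")
        case True thus ?thesis using H3 H2[of 0] by simp
      next
        case False
        hence "- j \<in> {- int Q2 .. -1}" using j by auto
        thus ?thesis using False H1 by simp
      qed
    qed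
  qed

  have sFz0: "smooth_wrt (win_moves UNIV) {w. (\<lambda>i. w (-1 - i)) \<in> V} (param_z Fx)"
    unfolding Fz_eq by (rule refl_smooth[OF sFxF])
  have sFxr: "smooth_wrt (win_moves UNIV) {w. (\<lambda>i. w (- i)) \<in> V} (\<lambda>w. Fx (\<lambda>i. w (- i)))"
    by (rule refl_smooth0[OF sFxF])
  have sFur: "smooth_wrt (win_moves UNIV) {w. (\<lambda>i. w (- i)) \<in> V} (\<lambda>w. Fu (\<lambda>i. w (- i)))"
    by (rule refl_smooth0[OF sFuF])
  have sP: "smooth_wrt (win_moves UNIV) {w. (\<lambda>i. w (- i)) \<in> V} (\<lambda>w. (Fx (\<lambda>i. w (- i)), Fu (\<lambda>i. w (- i))))"
    by (rule pair_smooth[OF good_win sFxr sFur])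
  have sFv0: "smooth_wrt (win_moves UNIV) {w. (\<lambda>i. w (- i)) \<in> V} (param_v g Fx Fu)"
    unfolding Fv_eq by (rule outer_smooth[OF good_win sP g_smooth]) simp
  have oV': "open V'"
  proof -
    have o1: "open {w::int \<Rightarrow> real^'m. (\<lambda>i. w (- i)) \<in> V}" by (rule smooth_open[OF sFxr])
    have o2: "open {w::int \<Rightarrow> real^'m. (\<lambda>i. w (-1 - i)) \<in> V}" by (rule smooth_open[OF sFz0])
    have "open ((\<lambda>w. (Fx (\<lambda>i. w (- i)), Fu (\<lambda>i. w (- i)))) -` A \<inter> {w. (\<lambda>i. w (- i)) \<in> V})"
      using smooth_cont[OF sP] o1 A_open by (simp add: continuous_on_open_vimage)
    hence "open (((\<lambda>w. (Fx (\<lambda>i. w (- i)), Fu (\<lambda>i. w (- i)))) -` A \<inter> {w. (\<lambda>i. w (- i)) \<in> V})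
             \<inter> {w::int \<Rightarrow> real^'m. (\<lambda>i. w (-1 - i)) \<in> V})" using o2 by (rule open_Int)
    moreover have "((\<lambda>w. (Fx (\<lambda>i. w (- i)), Fu (\<lambda>i. w (- i)))) -` A \<inter> {w. (\<lambda>i. w (- i)) \<in> V})
             \<inter> {w::int \<Rightarrow> real^'m. (\<lambda>i. w (-1 - i)) \<in> V} = V'" unfolding V'_def by auto
    ultimately show ?thesis by simp
  qed
  have sFz: "smooth_wrt (win_moves {- int R2..int R1}) V' (param_z Fx)"
    by (rule smooth_mono[OF sFz0 win_moves_mono[OF subset_UNIV] oV']) (auto simp: V'_def)
  have sFv: "smooth_wrt (win_moves {- int R2..int R1}) V' (param_v g Fx Fu)"
    by (rule smooth_mono[OF sFv0 win_moves_mono[OF subset_UNIV] oV']) (auto simp: V'_def)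
  have dFz: "\<forall>w w'. (\<forall>j \<in> {- int R2 .. int R1 - 1}. w j = w' j) \<longrightarrow> param_z Fx w = param_z Fx w'"
  proof (intro allI impI)
    fix w w' :: "int \<Rightarrow> real^'m" assume H: "\<forall>j \<in> {- int R2 .. int R1 - 1}. w j = w' j"
    show "param_z Fx w = param_z Fx w'" unfolding param_z_def
    proof (rule dFx[rule_format])
      fix j assume "j \<in> {- int R1..int R2 - 1}"
      hence "- j - 1 \<in> {- int R2 .. int R1 - 1}" by auto
      thus "w (- j - 1) = w' (- j - 1)" using H by blast
    qed
  qed
  have dFv: "\<forall>w w'. (\<forall>j \<in> {- int R2 .. int R1}. w j = w' j) \<longrightarrow> param_v g Fx Fu w = param_v g Fx Fu w'"
  proof (intro allI impI)
    fix w w' :: "int \<Rightarrow> real^'m" assume H: "\<forall>j \<in> {- int R2 .. int R1}. w j = w' j"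
    have e1: "Fx (\<lambda>j. w (- j)) = Fx (\<lambda>j. w' (- j))"
    proof (rule dFx[rule_format])
      fix j assume "j \<in> {- int R1..int R2 - 1}"
      hence "- j \<in> {- int R2 .. int R1}" by auto
      thus "w (- j) = w' (- j)" using H by blast
    qed
    have e2: "Fu (\<lambda>j. w (- j)) = Fu (\<lambda>j. w' (- j))"
    proof (rule dFu[rule_format])
      fix j assume "j \<in> {- int R1..int R2}"
      hence "- j \<in> {- int R2 .. int R1}" by auto
      thus "w (- j) = w' (- j)" using H by blast
    qed
    show "param_v g Fx Fu w = param_v g Fx Fu w'" unfolding param_v_def using e1 e2 by simp
  qed

  have E1: "Fx (\<lambda>j. phi (\<lambda>i. (g x0 u0, x0, u0))) = x0 \<and> Fu (\<lambda>j. phi (\<lambda>i. (g x0 u0, x0, u0))) = u0"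
  proof -
    have sc: "shift k (sig g (\<lambda>k. x0) (\<lambda>k. u0)) = (\<lambda>j. (g x0 u0, x0, u0))" for k
      by (simp add: shift_def sig_def)
    have tr: "traj f (\<lambda>k. x0) (\<lambda>k. u0)" by (simp add: traj_def equil)
    have "let y = (\<lambda>k. phi (shift k (sig g (\<lambda>k. x0) (\<lambda>k. u0))))
          in (\<forall>k. shift k y \<in> V) \<and> (\<forall>k. x0 = Fx (shift k y) \<and> u0 = Fu (shift k y))"
      using fwd[rule_format, of "\<lambda>k. x0" "\<lambda>k. u0"] tr sc U0 by simp
    thus ?thesis unfolding Let_def sc by (simp add: shift_def)
  qed
  have Th0: "Th ((\<lambda>i. (psi_u x0 (g x0 u0), x0, g x0 u0)), psi' (Pr (\<lambda>i. (psi_u x0 (g x0 u0), x0, g x0 u0))))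
             = (\<lambda>j. (g x0 u0, x0, u0))"
    by (rule ext) (simp add: Th_def Rm_def Pr_def psi'_def split_beta psi0)
  have U'0: "(\<lambda>j. (psi_u x0 (g x0 u0), x0, g x0 u0)) \<in> U'"
    unfolding U'_def using Th0 U0 fgB[OF x0u0_A] equil by (simp add: Pr_def)
  have V'0: "(\<lambda>j. phih (\<lambda>i. (psi_u x0 (g x0 u0), x0, g x0 u0))) \<in> V'"
  proof -
    have "phih (\<lambda>i. (psi_u x0 (g x0 u0), x0, g x0 u0)) = phi (\<lambda>i. (g x0 u0, x0, u0))"
      unfolding phih_eq using Th0 by simp
    thus ?thesis unfolding V'_def using V0 E1 x0u0_A by simp
  qed

  have fwd': "\<forall>z v. traj psi_x z v \<and> (\<forall>k. shift k (sig psi_u z v) \<in> U') \<longrightarrow>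
         (let y = (\<lambda>k. phih (shift k (sig psi_u z v)))
          in (\<forall>k. shift k y \<in> V') \<and> (\<forall>k. z k = param_z Fx (shift k y) \<and> v k = param_v g Fx Fu (shift k y)))"
  proof (intro allI impI, elim conjE)
    fix z :: "int \<Rightarrow> real^'n" and v :: "int \<Rightarrow> real^'m"
    assume tr: "traj psi_x z v" and inU: "\<forall>k. shift k (sig psi_u z v) \<in> U'"
    have zvB: "(z k, v k) \<in> B" for k using inU[rule_format, of k] unfolding U'_def
      by (simp add: Pr_def shift_apply sig_apply)
    have trk: "z (k + 1) = psi_x (z k) (v k)" for k using tr by (simp add: traj_def)
    define x where "x j = z (1 - j)" for j
    define u where "u j = psi_u (z (-j)) (v (-j))" for j
    have xj: "x j = psi_x (z (-j)) (v (-j))" for j using trk[of "-j"] by (simp add: x_def)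
    have h3: "g (x j) (u j) = v (-j)" for j using psi_right[OF zvB[of "-j"]] by (simp add: xj u_def)
    have trx: "traj f x u" unfolding traj_def
    proof
      fix k
      have "x (k + 1) = z (-k)" by (simp add: x_def)
      thus "x (k + 1) = f (x k) (u k)" using psi_right[OF zvB[of "-k"]] by (simp add: xj u_def)
    qed
    have KIe: "Th (shift k (sig psi_u z v), psi' (Pr (shift k (sig psi_u z v)))) = shift (-k) (sig g x u)" for k
    proof -
      have h1: "x j = z (1 - j)" for j unfolding x_def ..
      have h2: "u j = psi_u (z (-j)) (v (-j))" for j unfolding u_def ..
      have h4: "psi_x (z j) (v j) = z (j + 1)" for j by (rule trk[symmetric])
      show ?thesis unfolding psi'_def by (rule KI[where x=x and z=z and u=u and v=v and g=g and psi_x=psi_x and psi_u=psi_u, OF h1 h2 h3 h4])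
    qed
    have inU2: "\<forall>k. shift k (sig g x u) \<in> U"
    proof
      fix k
      have "Th (shift (-k) (sig psi_u z v), psi' (Pr (shift (-k) (sig psi_u z v)))) \<in> U"
        using inU[rule_format, of "-k"] unfolding U'_def by simp
      thus "shift k (sig g x u) \<in> U" using KIe[of "-k"] by simp
    qed
    define y where "y = (\<lambda>k. phi (shift k (sig g x u)))"
    have F1: "(\<forall>k. shift k y \<in> V) \<and> (\<forall>k. x k = Fx (shift k y) \<and> u k = Fu (shift k y))"
      using fwd[rule_format, of x u] trx inU2 unfolding Let_def y_def by blast
    have yh: "(\<lambda>k. phih (shift k (sig psi_u z v))) = (\<lambda>k. y (- k))"
      by (rule ext) (simp add: phih_eq KIe y_def)
    show "let y = (\<lambda>k. phih (shift k (sig psi_u z v)))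
          in (\<forall>k. shift k y \<in> V') \<and> (\<forall>k. z k = param_z Fx (shift k y) \<and> v k = param_v g Fx Fu (shift k y))"
      unfolding Let_def yh
    proof (intro conjI allI)
      fix k
      have a1: "(\<lambda>i. shift k (\<lambda>k. y (- k)) (- i)) \<in> V" unfolding rsh1 using F1 by blast
      have a2: "(\<lambda>i. shift k (\<lambda>k. y (- k)) (-1 - i)) \<in> V" unfolding rsh2 using F1 by blast
      have "Fx (shift (- k) y) = x (- k)" "Fu (shift (- k) y) = u (- k)" using F1 by auto
      hence a3: "(Fx (\<lambda>i. shift k (\<lambda>k. y (- k)) (- i)), Fu (\<lambda>i. shift k (\<lambda>k. y (- k)) (- i))) \<in> A"
        unfolding rsh1 using psiB[OF zvB[of k]] by (simp add: xj u_def)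
      show "shift k (\<lambda>k. y (- k)) \<in> V'" unfolding V'_def using a1 a2 a3 by simp
      have "param_z Fx (shift k (\<lambda>k. y (- k))) = x (1 - k)"
        unfolding Fz_eq rsh2 using F1 by simp
      thus "z k = param_z Fx (shift k (\<lambda>k. y (- k)))" by (simp add: x_def)
      have "param_v g Fx Fu (shift k (\<lambda>k. y (- k))) = g (x (- k)) (u (- k))"
        unfolding Fv_eq rsh1 using F1 by simp
      thus "v k = param_v g Fx Fu (shift k (\<lambda>k. y (- k)))" using h3[of "-k"] by simp
    qed
  qed

  have bwd': "\<forall>Y. (\<forall>k. shift k Y \<in> V') \<longrightarrow>
         (let z = (\<lambda>k. param_z Fx (shift k Y)); v = (\<lambda>k. param_v g Fx Fu (shift k Y))
          in traj psi_x z v \<and> (\<forall>k. shift k (sig psi_u z v) \<in> U') \<and>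
             (\<forall>k. phih (shift k (sig psi_u z v)) = Y k))"
  proof (intro allI impI)
    fix Y :: "int \<Rightarrow> real^'m" assume YV: "\<forall>k. shift k Y \<in> V'"
    define y where "y = (\<lambda>k. Y (- k))"
    have yV: "\<forall>k. shift k y \<in> V"
    proof
      fix k
      have "(\<lambda>i. shift (-k) Y (- i)) \<in> V" using YV[rule_format, of "-k"] unfolding V'_def by blast
      thus "shift k y \<in> V" unfolding rsh3 y_def .
    qed
    define x where "x = (\<lambda>k. Fx (shift k y))"
    define u where "u = (\<lambda>k. Fu (shift k y))"
    have B1: "traj f x u \<and> (\<forall>k. shift k (sig g x u) \<in> U) \<and> (\<forall>k. phi (shift k (sig g x u)) = y k)"
      using mp[OF spec[OF bwd, of y] yV] unfolding Let_def x_def u_def .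
    have trx: "x (k + 1) = f (x k) (u k)" for k using B1 unfolding traj_def by blast
    have xuA: "(x k, u k) \<in> A" for k
    proof -
      have "(Fx (\<lambda>i. shift (-k) Y (- i)), Fu (\<lambda>i. shift (-k) Y (- i))) \<in> A"
        using YV[rule_format, of "-k"] unfolding V'_def by blast
      thus ?thesis unfolding rsh3 x_def u_def y_def .
    qed
    define z where "z = (\<lambda>k. param_z Fx (shift k Y))"
    define v where "v = (\<lambda>k. param_v g Fx Fu (shift k Y))"
    have zx: "z k = x (1 - k)" for k unfolding z_def Fz_eq rsh4 x_def y_def ..
    have vx: "v k = g (x (- k)) (u (- k))" for k
      unfolding v_def Fv_eq rsh5 x_def u_def y_def by simp
    have h1: "x j = z (1 - j)" for j by (simp add: zx)
    have h4: "psi_x (z j) (v j) = z (j + 1)" for j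
    proof -
      have "z j = f (x (- j)) (u (- j))" using zx[of j] trx[of "-j"] by simp
      thus ?thesis using psi_left[OF xuA[of "-j"]] vx[of j] zx[of "j + 1"] by simp
    qed
    have h2: "u j = psi_u (z (-j)) (v (-j))" for j
    proof -
      have "z (-j) = f (x j) (u j)" using zx[of "-j"] trx[of j] by (simp add: add.commute)
      thus ?thesis using psi_left[OF xuA[of j]] vx[of "-j"] by simp
    qed
    have h3: "g (x j) (u j) = v (-j)" for j by (simp add: vx)
    have KIe: "Th (shift k (sig psi_u z v), psi' (Pr (shift k (sig psi_u z v)))) = shift (-k) (sig g x u)" for k
      unfolding psi'_def by (rule KI[where x=x and z=z and u=u and v=v and g=g and psi_x=psi_x and psi_u=psi_u, OF h1 h2 h3 h4])
    have zvB: "(z k, v k) \<in> B" for k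
    proof -
      have "z k = f (x (- k)) (u (- k))" using zx[of k] trx[of "-k"] by simp
      thus ?thesis using fgB[OF xuA[of "-k"]] vx[of k] by simp
    qed
    show "let z = (\<lambda>k. param_z Fx (shift k Y)); v = (\<lambda>k. param_v g Fx Fu (shift k Y))
          in traj psi_x z v \<and> (\<forall>k. shift k (sig psi_u z v) \<in> U') \<and>
             (\<forall>k. phih (shift k (sig psi_u z v)) = Y k)"
      unfolding Let_def z_def[symmetric] v_def[symmetric]
    proof (intro conjI allI)
      show "traj psi_x z v" unfolding traj_def using h4 by simp
      fix k
      show "shift k (sig psi_u z v) \<in> U'"
        unfolding U'_def using KIe[of k] zvB[of k] B1 by (simp add: Pr_def shift_apply sig_apply)
      show "phih (shift k (sig psi_u z v)) = Y k"
        unfolding phih_eq using KIe[of k] B1 by (simp add: y_def)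
    qed
  qed

  show ?thesis
    unfolding phih_def[symmetric]
    by (rule flat_withI[OF dphih dFz dFv U'0 sphih V'0 sFz sFv fwd' bwd'])
qed

lemma dir2:
  fixes f :: "real^'n \<Rightarrow> real^'m \<Rightarrow> real^'n"
    and g :: "real^'n \<Rightarrow> real^'m \<Rightarrow> real^'m"
    and psi_x :: "real^'n \<Rightarrow> real^'m \<Rightarrow> real^'n"
    and psi_u :: "real^'n \<Rightarrow> real^'m \<Rightarrow> real^'m"
    and x0 :: "real^'n" and u0 :: "real^'m"
    and A B :: "((real^'n) \<times> (real^'m)) set"
    and phih :: "(int \<Rightarrow> (real^'m) \<times> (real^'n) \<times> (real^'m)) \<Rightarrow> real^'m"
    and Fz :: "(int \<Rightarrow> real^'m) \<Rightarrow> real^'n" and Fv :: "(int \<Rightarrow> real^'m) \<Rightarrow> real^'m"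
  assumes f_smooth: "smooth_on UNIV (\<lambda>(x, u). f x u)"
    and g_smooth: "smooth_on UNIV (\<lambda>(x, u). g x u)"
    and equil: "f x0 u0 = x0"
    and x0u0_A: "(x0, u0) \<in> A"
    and fg_image: "(\<lambda>(x, u). (f x u, g x u)) ` A = B"
    and psi_left: "\<And>x u. (x, u) \<in> A \<Longrightarrow> psi_x (f x u) (g x u) = x \<and> psi_u (f x u) (g x u) = u"
    and psi_right: "\<And>z v. (z, v) \<in> B \<Longrightarrow> f (psi_x z v) (psi_u z v) = z \<and> g (psi_x z v) (psi_u z v) = v"
    and psi_smooth: "smooth_on B (\<lambda>(z, v). (psi_x z v, psi_u z v))"
    and A_open: "open A" and B_open: "open B"
    and dphih: "\<forall>s s'. (\<forall>j \<in> {- int Q1 .. -1}. fst (s j) = fst (s' j))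
              \<and> fst (snd (s 0)) = fst (snd (s' 0))
              \<and> (\<forall>j \<in> {0 .. int Q2}. snd (snd (s j)) = snd (snd (s' j)))
              \<longrightarrow> phih s = phih s'"
    and dFz: "\<forall>w w'. (\<forall>j \<in> {- int R1 .. int R2 - 1}. w j = w' j) \<longrightarrow> Fz w = Fz w'"
    and dFv: "\<forall>w w'. (\<forall>j \<in> {- int R1 .. int R2}. w j = w' j) \<longrightarrow> Fv w = Fv w'"
    and Uh0: "(\<lambda>j. (psi_u x0 (g x0 u0), x0, g x0 u0)) \<in> U"
    and sphih: "smooth_wrt (win_moves {- int Q1 .. int Q2}) U phih"
    and Vh0: "(\<lambda>j. phih (\<lambda>i. (psi_u x0 (g x0 u0), x0, g x0 u0))) \<in> V"
    and sFz: "smooth_wrt (win_moves {- int R1 .. int R2}) V Fz"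
    and sFv: "smooth_wrt (win_moves {- int R1 .. int R2}) V Fv"
    and fwd: "\<forall>x u. traj psi_x x u \<and> (\<forall>k. shift k (sig psi_u x u) \<in> U) \<longrightarrow>
         (let y = (\<lambda>k. phih (shift k (sig psi_u x u)))
          in (\<forall>k. shift k y \<in> V) \<and> (\<forall>k. x k = Fz (shift k y) \<and> u k = Fv (shift k y)))"
    and bwd: "\<forall>y. (\<forall>k. shift k y \<in> V) \<longrightarrow>
         (let x = (\<lambda>k. Fz (shift k y)); u = (\<lambda>k. Fv (shift k y))
          in traj psi_x x u \<and> (\<forall>k. shift k (sig psi_u x u) \<in> U) \<and>
             (\<forall>k. phih (shift k (sig psi_u x u)) = y k))"
  shows "is_flat_output f g x0 u0 (subst_out f g phih)"
proof -
  define fg' where "fg' = (\<lambda>(a::real^'n, b::real^'m). (f a b, g a b))"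
  have fg_smooth': "smooth_on UNIV fg'"
  proof -
    have "smooth_wrt euclid_moves UNIV (\<lambda>p. ((\<lambda>(x, u). f x u) p, (\<lambda>(x, u). g x u) p))"
      by (rule pair_smooth[OF good_euclid f_smooth[unfolded smooth_on_def] g_smooth[unfolded smooth_on_def]])
    moreover have "(\<lambda>p. ((\<lambda>(x, u). f x u) p, (\<lambda>(x, u). g x u) p)) = fg'"
      unfolding fg'_def by (auto simp: fun_eq_iff)
    ultimately show ?thesis unfolding smooth_on_def by simp
  qed
  define psiu' where "psiu' = (\<lambda>p::(real^'n) \<times> (real^'m). snd ((\<lambda>(z, v). (psi_x z v, psi_u z v)) p))"
  have psiu_smooth: "smooth_on B psiu'"
    unfolding psiu'_def smooth_on_def
    by (rule linear_smooth[OF good_euclid bounded_linear_snd psi_smooth[unfolded smooth_on_def]])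
  define phi where "phi = subst_out f g phih"
  define Fx where "Fx = param_z Fz"
  define Fu where "Fu = (\<lambda>w. psiu' (Fz (\<lambda>i. w (- i)), Fv (\<lambda>i. w (- i))))"
  have Fu_eq: "Fu w = psi_u (Fz (\<lambda>i. w (- i))) (Fv (\<lambda>i. w (- i)))" for w
    unfolding Fu_def psiu'_def by simp
  define U' where "U' = {s::int \<Rightarrow> (real^'m) \<times> (real^'n) \<times> (real^'m). Pr s \<in> A \<and> Th (s, fg' (Pr s)) \<in> U}"
  define V' where "V' = {w::int \<Rightarrow> real^'m. (\<lambda>i. w (- i)) \<in> V \<and> (\<lambda>i. w (-1 - i)) \<in> V \<and>
                          (Fz (\<lambda>i. w (- i)), Fv (\<lambda>i. w (- i))) \<in> B}"
  have psiB: "(psi_x z v, psi_u z v) \<in> A" if zvB0: "(z, v) \<in> B" for z v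
  proof -
    obtain a b where ab: "(a, b) \<in> A" "z = f a b" "v = g a b" using zvB0 fg_image by force
    thus ?thesis using psi_left[OF ab(1)] by simp
  qed
  have fgB: "(f x u, g x u) \<in> B" if "(x, u) \<in> A" for x u using that fg_image by force
  have psi0: "psi_x x0 (g x0 u0) = x0" "psi_u x0 (g x0 u0) = u0"
    using psi_left[OF x0u0_A] equil by auto

  have sphihF: "smooth_wrt (win_moves UNIV) U phih"
  proof (rule INV[OF sphih _ subset_refl])
    show "dep {- int Q1..int Q2} phih" unfolding dep_def
    proof (intro allI impI)
      fix w w' :: "int \<Rightarrow> (real^'m) \<times> (real^'n) \<times> (real^'m)" assume ag: "\<forall>j\<in>{- int Q1..int Q2}. w j = w' j"
      show "phih w = phih w'" by (rule dphih[rule_format]) (use ag in auto)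
    qed
  qed
  have sFzF: "smooth_wrt (win_moves UNIV) V Fz"
    by (rule INV[OF sFz dep_from[OF dFz]]) auto
  have sFvF: "smooth_wrt (win_moves UNIV) V Fv"
    by (rule INV[OF sFv dep_from[OF dFv] subset_refl])

  have phi_eq: "phi = (\<lambda>s. phih (Th (s, fg' (Pr s))))"
  proof (rule ext)
    fix s :: "int \<Rightarrow> (real^'m) \<times> (real^'n) \<times> (real^'m)"
    show "phi s = phih (Th (s, fg' (Pr s)))"
      unfolding phi_def subst_out_def
      by (rule dphih[rule_format]) (auto simp: Th_def Rm_def Pr_def fg'_def split_beta)
  qed
  have sphiT: "smooth_wrt (win_moves UNIV) {s. Pr s \<in> UNIV \<and> Th (s, fg' (Pr s)) \<in> U} phi"
    unfolding phi_eq by (rule Theta_smooth[OF sphihF fg_smooth'])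
  have oU': "open U'"
  proof -
    have "open ({s. Pr s \<in> UNIV \<and> Th (s, fg' (Pr s)) \<in> U} \<inter> Pr -` A)"
      by (rule open_Int[OF smooth_open[OF sphiT] open_vimage[OF A_open Pr_cont]])
    moreover have "{s. Pr s \<in> UNIV \<and> Th (s, fg' (Pr s)) \<in> U} \<inter> Pr -` A = U'" unfolding U'_def by auto
    ultimately show ?thesis by simp
  qed
  have sphi: "smooth_wrt (win_moves {- int Q2..int Q1}) U' phi"
    by (rule smooth_mono[OF sphiT win_moves_mono[OF subset_UNIV] oU']) (auto simp: U'_def)
  have dphi: "\<forall>s s'. (\<forall>j \<in> {- int Q2 .. -1}. fst (s j) = fst (s' j))
              \<and> fst (snd (s 0)) = fst (snd (s' 0))
              \<and> (\<forall>j \<in> {0 .. int Q1}. snd (snd (s j)) = snd (snd (s' j)))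
              \<longrightarrow> phi s = phi s'"
  proof (intro allI impI)
    fix s s' :: "int \<Rightarrow> (real^'m) \<times> (real^'n) \<times> (real^'m)"
    assume H: "(\<forall>j \<in> {- int Q2 .. -1}. fst (s j) = fst (s' j))
              \<and> fst (snd (s 0)) = fst (snd (s' 0))
              \<and> (\<forall>j \<in> {0 .. int Q1}. snd (snd (s j)) = snd (snd (s' j)))"
    have H1: "fst (s j) = fst (s' j)" if "j \<in> {- int Q2 .. -1}" for j using H that by blast
    have H2: "snd (snd (s j)) = snd (snd (s' j))" if "j \<in> {0 .. int Q1}" for j using H that by blast
    have H3: "fst (snd (s 0)) = fst (snd (s' 0))" using H by blast
    show "phi s = phi s'"
      unfolding phi_def subst_out_def
    proof (rule dphih[rule_format], intro conjI ballI)
      fix j assume "j \<in> {- int Q1..-1}"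
      hence "- j \<in> {0 .. int Q1}" by auto
      thus "fst (snd (snd (s (- j))), f (fst (snd (s (- j)))) (snd (snd (s (- j)))),
              if j = 0 then g (fst (snd (s 0))) (snd (snd (s 0))) else fst (s (- j))) =
            fst (snd (snd (s' (- j))), f (fst (snd (s' (- j)))) (snd (snd (s' (- j)))),
              if j = 0 then g (fst (snd (s' 0))) (snd (snd (s' 0))) else fst (s' (- j)))"
        using H2 by simp
    next
      have "snd (snd (s 0)) = snd (snd (s' 0))" using H2[of 0] by simp
      thus "fst (snd (snd (snd (s (- 0))), f (fst (snd (s (- 0)))) (snd (snd (s (- 0)))),
              if 0 = (0::int) then g (fst (snd (s 0))) (snd (snd (s 0))) else fst (s (- 0)))) =
            fst (snd (snd (snd (s' (- 0))), f (fst (snd (s' (- 0)))) (snd (snd (s' (- 0)))),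
              if 0 = (0::int) then g (fst (snd (s' 0))) (snd (snd (s' 0))) else fst (s' (- 0))))"
        using H3 by simp
    next
      fix j assume j: "j \<in> {0..int Q2}"
      show "snd (snd (snd (snd (s (- j))), f (fst (snd (s (- j)))) (snd (snd (s (- j)))),
              if j = 0 then g (fst (snd (s 0))) (snd (snd (s 0))) else fst (s (- j)))) =
            snd (snd (snd (snd (s' (- j))), f (fst (snd (s' (- j)))) (snd (snd (s' (- j)))),
              if j = 0 then g (fst (snd (s' 0))) (snd (snd (s' 0))) else fst (s' (- j))))"
      proof (cases "j = 0")
        case True thus ?thesis using H3 H2[of 0] by simp
      next
        case False
        hence "- j \<in> {- int Q2 .. -1}" using j by auto
        thus ?thesis using False H1 by simp
      qed
    qed
  qed

  have sFx0: "smooth_wrt (win_moves UNIV) {w. (\<lambda>i. w (-1 - i)) \<in> V} Fx"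
    unfolding Fx_def Fz_eq by (rule refl_smooth[OF sFzF])
  have sFzr: "smooth_wrt (win_moves UNIV) {w. (\<lambda>i. w (- i)) \<in> V} (\<lambda>w. Fz (\<lambda>i. w (- i)))"
    by (rule refl_smooth0[OF sFzF])
  have sFvr: "smooth_wrt (win_moves UNIV) {w. (\<lambda>i. w (- i)) \<in> V} (\<lambda>w. Fv (\<lambda>i. w (- i)))"
    by (rule refl_smooth0[OF sFvF])
  have sP: "smooth_wrt (win_moves UNIV) {w. (\<lambda>i. w (- i)) \<in> V} (\<lambda>w. (Fz (\<lambda>i. w (- i)), Fv (\<lambda>i. w (- i))))"
    by (rule pair_smooth[OF good_win sFzr sFvr])
  have oV': "open V'"
  proof -
    have o1: "open {w::int \<Rightarrow> real^'m. (\<lambda>i. w (- i)) \<in> V}" by (rule smooth_open[OF sFzr])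
    have o2: "open {w::int \<Rightarrow> real^'m. (\<lambda>i. w (-1 - i)) \<in> V}" by (rule smooth_open[OF sFx0])
    have "open ((\<lambda>w. (Fz (\<lambda>i. w (- i)), Fv (\<lambda>i. w (- i)))) -` B \<inter> {w. (\<lambda>i. w (- i)) \<in> V})"
      using smooth_cont[OF sP] o1 B_open by (simp add: continuous_on_open_vimage)
    hence "open (((\<lambda>w. (Fz (\<lambda>i. w (- i)), Fv (\<lambda>i. w (- i)))) -` B \<inter> {w. (\<lambda>i. w (- i)) \<in> V})
             \<inter> {w::int \<Rightarrow> real^'m. (\<lambda>i. w (-1 - i)) \<in> V})" using o2 by (rule open_Int)
    moreover have "((\<lambda>w. (Fz (\<lambda>i. w (- i)), Fv (\<lambda>i. w (- i)))) -` B \<inter> {w. (\<lambda>i. w (- i)) \<in> V})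
             \<inter> {w::int \<Rightarrow> real^'m. (\<lambda>i. w (-1 - i)) \<in> V} = V'" unfolding V'_def by auto
    ultimately show ?thesis by simp
  qed
  have sPV: "smooth_wrt (win_moves UNIV) V' (\<lambda>w. (Fz (\<lambda>i. w (- i)), Fv (\<lambda>i. w (- i))))"
    by (rule smooth_mono[OF sP subset_refl oV']) (auto simp: V'_def)
  have sFu0: "smooth_wrt (win_moves UNIV) V' Fu"
    unfolding Fu_def by (rule outer_smooth[OF good_win sPV psiu_smooth]) (simp add: V'_def)
  have sFx: "smooth_wrt (win_moves {- int R2..int R1}) V' Fx"
    by (rule smooth_mono[OF sFx0 win_moves_mono[OF subset_UNIV] oV']) (auto simp: V'_def)
  have sFu: "smooth_wrt (win_moves {- int R2..int R1}) V' Fu"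
    by (rule smooth_mono[OF sFu0 win_moves_mono[OF subset_UNIV] oV' subset_refl])
  have dFx: "\<forall>w w'. (\<forall>j \<in> {- int R2 .. int R1 - 1}. w j = w' j) \<longrightarrow> Fx w = Fx w'"
  proof (intro allI impI)
    fix w w' :: "int \<Rightarrow> real^'m" assume H: "\<forall>j \<in> {- int R2 .. int R1 - 1}. w j = w' j"
    show "Fx w = Fx w'" unfolding Fx_def param_z_def
    proof (rule dFz[rule_format])
      fix j assume "j \<in> {- int R1..int R2 - 1}"
      hence "- j - 1 \<in> {- int R2 .. int R1 - 1}" by auto
      thus "w (- j - 1) = w' (- j - 1)" using H by blast
    qed
  qed
  have dFu: "\<forall>w w'. (\<forall>j \<in> {- int R2 .. int R1}. w j = w' j) \<longrightarrow> Fu w = Fu w'"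
  proof (intro allI impI)
    fix w w' :: "int \<Rightarrow> real^'m" assume H: "\<forall>j \<in> {- int R2 .. int R1}. w j = w' j"
    have e1: "Fz (\<lambda>j. w (- j)) = Fz (\<lambda>j. w' (- j))"
    proof (rule dFz[rule_format])
      fix j assume "j \<in> {- int R1..int R2 - 1}"
      hence "- j \<in> {- int R2 .. int R1}" by auto
      thus "w (- j) = w' (- j)" using H by blast
    qed
    have e2: "Fv (\<lambda>j. w (- j)) = Fv (\<lambda>j. w' (- j))"
    proof (rule dFv[rule_format])
      fix j assume "j \<in> {- int R1..int R2}"
      hence "- j \<in> {- int R2 .. int R1}" by auto
      thus "w (- j) = w' (- j)" using H by blast
    qed
    show "Fu w = Fu w'" unfolding Fu_def using e1 e2 by simp
  qed

  have Uh0': "(\<lambda>j. (u0, x0, g x0 u0)) \<in> U" using Uh0 psi0 by simp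
  have E1: "Fz (\<lambda>j. phih (\<lambda>i. (u0, x0, g x0 u0))) = x0 \<and> Fv (\<lambda>j. phih (\<lambda>i. (u0, x0, g x0 u0))) = g x0 u0"
  proof -
    have sc: "shift k (sig psi_u (\<lambda>k. x0) (\<lambda>k. g x0 u0)) = (\<lambda>j. (u0, x0, g x0 u0))" for k
      by (simp add: shift_def sig_def psi0)
    have tr: "traj psi_x (\<lambda>k. x0) (\<lambda>k. g x0 u0)" by (simp add: traj_def psi0)
    have "let y = (\<lambda>k. phih (shift k (sig psi_u (\<lambda>k. x0) (\<lambda>k. g x0 u0))))
          in (\<forall>k. shift k y \<in> V) \<and> (\<forall>k. x0 = Fz (shift k y) \<and> g x0 u0 = Fv (shift k y))"
      using fwd[rule_format, of "\<lambda>k. x0" "\<lambda>k. g x0 u0"] tr sc Uh0' by simp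
    thus ?thesis unfolding Let_def sc by (simp add: shift_def)
  qed
  have Th0: "Th ((\<lambda>i. (g x0 u0, x0, u0)), fg' (Pr (\<lambda>i. (g x0 u0, x0, u0)))) = (\<lambda>j. (u0, x0, g x0 u0))"
    by (rule ext) (simp add: Th_def Rm_def Pr_def fg'_def split_beta equil)
  have U'0: "(\<lambda>j. (g x0 u0, x0, u0)) \<in> U'"
    unfolding U'_def using Th0 Uh0' x0u0_A by (simp add: Pr_def)
  have V'0: "(\<lambda>j. phi (\<lambda>i. (g x0 u0, x0, u0))) \<in> V'"
  proof -
    have "phi (\<lambda>i. (g x0 u0, x0, u0)) = phih (\<lambda>i. (u0, x0, g x0 u0))"
      unfolding phi_eq using Th0 by simp
    moreover have "(\<lambda>j. phih (\<lambda>i. (u0, x0, g x0 u0))) \<in> V" using Vh0 psi0 by simp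
    ultimately show ?thesis unfolding V'_def using E1 fgB[OF x0u0_A] equil by simp
  qed

  have fwd': "\<forall>x u. traj f x u \<and> (\<forall>k. shift k (sig g x u) \<in> U') \<longrightarrow>
         (let y = (\<lambda>k. phi (shift k (sig g x u)))
          in (\<forall>k. shift k y \<in> V') \<and> (\<forall>k. x k = Fx (shift k y) \<and> u k = Fu (shift k y)))"
  proof (intro allI impI, elim conjE)
    fix x :: "int \<Rightarrow> real^'n" and u :: "int \<Rightarrow> real^'m"
    assume tr: "traj f x u" and inU: "\<forall>k. shift k (sig g x u) \<in> U'"
    have xuA: "(x k, u k) \<in> A" for k using inU[rule_format, of k] unfolding U'_def
      by (simp add: Pr_def shift_apply sig_apply)
    have trx: "x (k + 1) = f (x k) (u k)" for k using tr by (simp add: traj_def)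
    define z where "z j = x (1 - j)" for j
    define v where "v j = g (x (-j)) (u (-j))" for j
    have zf: "z j = f (x (-j)) (u (-j))" for j using trx[of "-j"] by (simp add: z_def)
    have h3': "psi_u (z j) (v j) = u (-j)" for j using psi_left[OF xuA[of "-j"]] by (simp add: zf v_def)
    have h4: "psi_x (z j) (v j) = z (j + 1)" for j
    proof -
      have "z (j + 1) = x (- j)" by (simp add: z_def)
      thus ?thesis using psi_left[OF xuA[of "-j"]] by (simp add: zf v_def)
    qed
    have KIe: "Th (shift k (sig g x u), fg' (Pr (shift k (sig g x u)))) = shift (-k) (sig psi_u z v)" for k
    proof -
      have h1': "z j = x (1 - j)" for j unfolding z_def ..
      have h2': "v j = g (x (-j)) (u (-j))" for j unfolding v_def ..
      have h4': "f (x j) (u j) = x (j + 1)" for j by (rule trx[symmetric])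
      show ?thesis unfolding fg'_def
        by (rule KI[where x=z and z=x and u=v and v=u and g=psi_u and psi_x=f and psi_u=g, OF h1' h2' h3' h4'])
    qed
    have inU2: "\<forall>k. shift k (sig psi_u z v) \<in> U"
    proof
      fix k
      have "Th (shift (-k) (sig g x u), fg' (Pr (shift (-k) (sig g x u)))) \<in> U"
        using inU[rule_format, of "-k"] unfolding U'_def by simp
      thus "shift k (sig psi_u z v) \<in> U" using KIe[of "-k"] by simp
    qed
    have trz: "traj psi_x z v" unfolding traj_def using h4 by simp
    define Y where "Y = (\<lambda>k. phih (shift k (sig psi_u z v)))"
    have F1: "(\<forall>k. shift k Y \<in> V) \<and> (\<forall>k. z k = Fz (shift k Y) \<and> v k = Fv (shift k Y))"
      using mp[OF spec[OF spec[OF fwd, of z], of v] conjI[OF trz inU2]] unfolding Let_def Y_def .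
    have yh: "(\<lambda>k. phi (shift k (sig g x u))) = (\<lambda>k. Y (- k))"
      by (rule ext) (simp add: phi_eq KIe Y_def)
    show "let y = (\<lambda>k. phi (shift k (sig g x u)))
          in (\<forall>k. shift k y \<in> V') \<and> (\<forall>k. x k = Fx (shift k y) \<and> u k = Fu (shift k y))"
      unfolding Let_def yh
    proof (intro conjI allI)
      fix k
      have a1: "(\<lambda>i. shift k (\<lambda>k. Y (- k)) (- i)) \<in> V" unfolding rsh1 using F1 by blast
      have a2: "(\<lambda>i. shift k (\<lambda>k. Y (- k)) (-1 - i)) \<in> V" unfolding rsh2 using F1 by blast
      have "Fz (shift (- k) Y) = z (- k)" "Fv (shift (- k) Y) = v (- k)" using F1 by auto
      hence a3: "(Fz (\<lambda>i. shift k (\<lambda>k. Y (- k)) (- i)), Fv (\<lambda>i. shift k (\<lambda>k. Y (- k)) (- i))) \<in> B"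
        unfolding rsh1 using fgB[OF xuA[of k]] by (simp add: zf v_def)
      show "shift k (\<lambda>k. Y (- k)) \<in> V'" unfolding V'_def using a1 a2 a3 by simp
      have "Fx (shift k (\<lambda>k. Y (- k))) = z (1 - k)"
        unfolding Fx_def Fz_eq rsh2 using F1 by simp
      thus "x k = Fx (shift k (\<lambda>k. Y (- k)))" by (simp add: z_def)
      have "Fu (shift k (\<lambda>k. Y (- k))) = psi_u (z (- k)) (v (- k))"
        unfolding Fu_eq rsh1 using F1 by simp
      thus "u k = Fu (shift k (\<lambda>k. Y (- k)))" using h3'[of "-k"] by simp
    qed
  qed

  have bwd': "\<forall>y. (\<forall>k. shift k y \<in> V') \<longrightarrow>
         (let x = (\<lambda>k. Fx (shift k y)); u = (\<lambda>k. Fu (shift k y))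
          in traj f x u \<and> (\<forall>k. shift k (sig g x u) \<in> U') \<and>
             (\<forall>k. phi (shift k (sig g x u)) = y k))"
  proof (intro allI impI)
    fix y :: "int \<Rightarrow> real^'m" assume yV: "\<forall>k. shift k y \<in> V'"
    define Y where "Y = (\<lambda>k. y (- k))"
    have YV: "\<forall>k. shift k Y \<in> V"
    proof
      fix k
      have "(\<lambda>i. shift (-k) y (- i)) \<in> V" using yV[rule_format, of "-k"] unfolding V'_def by blast
      thus "shift k Y \<in> V" unfolding rsh3 Y_def .
    qed
    define z where "z = (\<lambda>k. Fz (shift k Y))"
    define v where "v = (\<lambda>k. Fv (shift k Y))"
    have B1: "traj psi_x z v \<and> (\<forall>k. shift k (sig psi_u z v) \<in> U) \<and> (\<forall>k. phih (shift k (sig psi_u z v)) = Y k)"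
      using mp[OF spec[OF bwd, of Y] YV] unfolding Let_def z_def v_def .
    have trz: "z (k + 1) = psi_x (z k) (v k)" for k using B1 unfolding traj_def by blast
    have zvB: "(z k, v k) \<in> B" for k
    proof -
      have "(Fz (\<lambda>i. shift (-k) y (- i)), Fv (\<lambda>i. shift (-k) y (- i))) \<in> B"
        using yV[rule_format, of "-k"] unfolding V'_def by blast
      thus ?thesis unfolding rsh3 z_def v_def Y_def .
    qed
    define x where "x = (\<lambda>k. Fx (shift k y))"
    define u where "u = (\<lambda>k. Fu (shift k y))"
    have xz: "x k = z (1 - k)" for k unfolding x_def Fx_def Fz_eq rsh4 z_def Y_def ..
    have uz: "u k = psi_u (z (- k)) (v (- k))" for k
      unfolding u_def Fu_eq rsh5 z_def v_def Y_def by simp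
    have xpsi: "x k = psi_x (z (- k)) (v (- k))" for k using xz[of k] trz[of "-k"] by simp
    have trx: "x (k + 1) = f (x k) (u k)" for k
    proof -
      have "x (k + 1) = z (- k)" using xz[of "k + 1"] by simp
      thus ?thesis using psi_right[OF zvB[of "-k"]] by (simp add: xpsi uz)
    qed
    have xuA: "(x k, u k) \<in> A" for k using psiB[OF zvB[of "-k"]] by (simp add: xpsi uz)
    have KIe: "Th (shift k (sig g x u), fg' (Pr (shift k (sig g x u)))) = shift (-k) (sig psi_u z v)" for k
    proof -
      have h1': "z j = x (1 - j)" for j using xz[of "1 - j"] by simp
      have h2': "v j = g (x (-j)) (u (-j))" for j using psi_right[OF zvB[of j]] xpsi[of "-j"] uz[of "-j"] by simp
      have h3': "psi_u (z j) (v j) = u (-j)" for j using uz[of "-j"] by simp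
      have h4': "f (x j) (u j) = x (j + 1)" for j by (rule trx[symmetric])
      show ?thesis unfolding fg'_def
        by (rule KI[where x=z and z=x and u=v and v=u and g=psi_u and psi_x=f and psi_u=g, OF h1' h2' h3' h4'])
    qed
    show "let x = (\<lambda>k. Fx (shift k y)); u = (\<lambda>k. Fu (shift k y))
          in traj f x u \<and> (\<forall>k. shift k (sig g x u) \<in> U') \<and>
             (\<forall>k. phi (shift k (sig g x u)) = y k)"
      unfolding Let_def x_def[symmetric] u_def[symmetric]
    proof (intro conjI allI)
      show "traj f x u" unfolding traj_def using trx by simp
      fix k
      show "shift k (sig g x u) \<in> U'"
        unfolding U'_def using KIe[of k] xuA[of k] B1 by (simp add: Pr_def shift_apply sig_apply)
      show "phi (shift k (sig g x u)) = y k"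
        unfolding phi_eq using KIe[of k] B1 by (simp add: Y_def)
    qed
  qed

  have "flat_with f g x0 u0 phi Fx Fu"
    by (rule flat_withI[OF dphi dFx dFu U'0 sphi V'0 sFx sFu fwd' bwd'])
  thus ?thesis unfolding is_flat_output_def phi_def by blast
qed

theorem theorem3:
  fixes f :: "real^'n \<Rightarrow> real^'m \<Rightarrow> real^'n"
    and g :: "real^'n \<Rightarrow> real^'m \<Rightarrow> real^'m"
    and psi_x :: "real^'n \<Rightarrow> real^'m \<Rightarrow> real^'n"
    and psi_u :: "real^'n \<Rightarrow> real^'m \<Rightarrow> real^'m"
    and x0 :: "real^'n" and u0 :: "real^'m"
    and A B :: "((real^'n) \<times> (real^'m)) set"
  assumes f_smooth: "smooth_on UNIV (\<lambda>(x, u). f x u)"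
    and g_smooth: "smooth_on UNIV (\<lambda>(x, u). g x u)"
    and rank_u: "\<And>x u. dim (range (frechet_derivative (\<lambda>u'. f x u') (at u))) = CARD('m)"
    and rank_xu: "\<And>x u. dim (range (frechet_derivative (\<lambda>(x', u'). f x' u') (at (x, u)))) = CARD('n)"
    and equil: "f x0 u0 = x0"
    and A_open: "open A" and B_open: "open B" and x0u0_A: "(x0, u0) \<in> A"
    and fg_image: "(\<lambda>(x, u). (f x u, g x u)) ` A = B"
    and psi_left: "\<And>x u. (x, u) \<in> A \<Longrightarrow> psi_x (f x u) (g x u) = x \<and> psi_u (f x u) (g x u) = u"
    and psi_right: "\<And>z v. (z, v) \<in> B \<Longrightarrow> f (psi_x z v) (psi_u z v) = z \<and> g (psi_x z v) (psi_u z v) = v"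
    and psi_smooth: "smooth_on B (\<lambda>(z, v). (psi_x z v, psi_u z v))"
  shows "(flat psi_x psi_u x0 (g x0 u0) \<longleftrightarrow> flat f g x0 u0)
    \<and> (\<forall>phi Fx Fu. flat_with f g x0 u0 phi Fx Fu \<longrightarrow>
          flat_with psi_x psi_u x0 (g x0 u0) (subst_out psi_x psi_u phi) (param_z Fx) (param_v g Fx Fu))
    \<and> (\<forall>phihat. is_flat_output psi_x psi_u x0 (g x0 u0) phihat \<longrightarrow>
          is_flat_output f g x0 u0 (subst_out f g phihat))"
proof -
  have C2: "\<forall>phi Fx Fu. flat_with f g x0 u0 phi Fx Fu \<longrightarrow>
          flat_with psi_x psi_u x0 (g x0 u0) (subst_out psi_x psi_u phi) (param_z Fx) (param_v g Fx Fu)"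
  proof (intro allI impI)
    fix phi Fx Fu assume fw: "flat_with f g x0 u0 phi Fx Fu"
    from fw show "flat_with psi_x psi_u x0 (g x0 u0) (subst_out psi_x psi_u phi) (param_z Fx) (param_v g Fx Fu)"
    proof (rule flat_withE)
      fix Q1 Q2 R1 R2 U V
      assume a: "\<forall>s s'. (\<forall>j \<in> {- int Q1 .. -1}. fst (s j) = fst (s' j))
              \<and> fst (snd (s 0)) = fst (snd (s' 0))
              \<and> (\<forall>j \<in> {0 .. int Q2}. snd (snd (s j)) = snd (snd (s' j)))
              \<longrightarrow> phi s = phi s'"
        "\<forall>w w'. (\<forall>j \<in> {- int R1 .. int R2 - 1}. w j = w' j) \<longrightarrow> Fx w = Fx w'"
        "\<forall>w w'. (\<forall>j \<in> {- int R1 .. int R2}. w j = w' j) \<longrightarrow> Fu w = Fu w'"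
        "(\<lambda>j. (g x0 u0, x0, u0)) \<in> U"
        "smooth_wrt (win_moves {- int Q1 .. int Q2}) U phi"
        "(\<lambda>j. phi (\<lambda>i. (g x0 u0, x0, u0))) \<in> V"
        "smooth_wrt (win_moves {- int R1 .. int R2}) V Fx"
        "smooth_wrt (win_moves {- int R1 .. int R2}) V Fu"
        "\<forall>x u. traj f x u \<and> (\<forall>k. shift k (sig g x u) \<in> U) \<longrightarrow>
         (let y = (\<lambda>k. phi (shift k (sig g x u)))
          in (\<forall>k. shift k y \<in> V) \<and> (\<forall>k. x k = Fx (shift k y) \<and> u k = Fu (shift k y)))"
        "\<forall>y. (\<forall>k. shift k y \<in> V) \<longrightarrow>
         (let x = (\<lambda>k. Fx (shift k y)); u = (\<lambda>k. Fu (shift k y))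
          in traj f x u \<and> (\<forall>k. shift k (sig g x u) \<in> U) \<and>
             (\<forall>k. phi (shift k (sig g x u)) = y k))"
      show ?thesis
        by (rule dir1[OF g_smooth equil x0u0_A fg_image psi_left psi_right psi_smooth A_open a])
    qed
  qed
  have C3: "\<forall>phihat. is_flat_output psi_x psi_u x0 (g x0 u0) phihat \<longrightarrow>
          is_flat_output f g x0 u0 (subst_out f g phihat)"
  proof (intro allI impI)
    fix phihat assume "is_flat_output psi_x psi_u x0 (g x0 u0) phihat"
    then obtain Fz Fv where fw: "flat_with psi_x psi_u x0 (g x0 u0) phihat Fz Fv"
      unfolding is_flat_output_def by blast
    from fw show "is_flat_output f g x0 u0 (subst_out f g phihat)"
    proof (rule flat_withE)
      fix Q1 Q2 R1 R2 U V
      assume a: "\<forall>s s'. (\<forall>j \<in> {- int Q1 .. -1}. fst (s j) = fst (s' j))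
              \<and> fst (snd (s 0)) = fst (snd (s' 0))
              \<and> (\<forall>j \<in> {0 .. int Q2}. snd (snd (s j)) = snd (snd (s' j)))
              \<longrightarrow> phihat s = phihat s'"
        "\<forall>w w'. (\<forall>j \<in> {- int R1 .. int R2 - 1}. w j = w' j) \<longrightarrow> Fz w = Fz w'"
        "\<forall>w w'. (\<forall>j \<in> {- int R1 .. int R2}. w j = w' j) \<longrightarrow> Fv w = Fv w'"
        "(\<lambda>j. (psi_u x0 (g x0 u0), x0, g x0 u0)) \<in> U"
        "smooth_wrt (win_moves {- int Q1 .. int Q2}) U phihat"
        "(\<lambda>j. phihat (\<lambda>i. (psi_u x0 (g x0 u0), x0, g x0 u0))) \<in> V"
        "smooth_wrt (win_moves {- int R1 .. int R2}) V Fz"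
        "smooth_wrt (win_moves {- int R1 .. int R2}) V Fv"
        "\<forall>x u. traj psi_x x u \<and> (\<forall>k. shift k (sig psi_u x u) \<in> U) \<longrightarrow>
         (let y = (\<lambda>k. phihat (shift k (sig psi_u x u)))
          in (\<forall>k. shift k y \<in> V) \<and> (\<forall>k. x k = Fz (shift k y) \<and> u k = Fv (shift k y)))"
        "\<forall>y. (\<forall>k. shift k y \<in> V) \<longrightarrow>
         (let x = (\<lambda>k. Fz (shift k y)); u = (\<lambda>k. Fv (shift k y))
          in traj psi_x x u \<and> (\<forall>k. shift k (sig psi_u x u) \<in> U) \<and>
             (\<forall>k. phihat (shift k (sig psi_u x u)) = y k))"
      show ?thesis
        by (rule dir2[OF f_smooth g_smooth equil x0u0_A fg_image psi_left psi_right psi_smooth A_open B_open a])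
    qed
  qed
  have C1: "flat psi_x psi_u x0 (g x0 u0) \<longleftrightarrow> flat f g x0 u0"
  proof
    assume "flat psi_x psi_u x0 (g x0 u0)"
    then obtain phihat where "is_flat_output psi_x psi_u x0 (g x0 u0) phihat" unfolding flat_def by blast
    hence "is_flat_output f g x0 u0 (subst_out f g phihat)" using C3 by blast
    thus "flat f g x0 u0" unfolding flat_def by blast
  next
    assume "flat f g x0 u0"
    then obtain phi Fx Fu where "flat_with f g x0 u0 phi Fx Fu"
      unfolding flat_def is_flat_output_def by blast
    hence "flat_with psi_x psi_u x0 (g x0 u0) (subst_out psi_x psi_u phi) (param_z Fx) (param_v g Fx Fu)"
      using C2 by blast
    thus "flat psi_x psi_u x0 (g x0 u0)" unfolding flat_def is_flat_output_def by blast
  qed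
  show ?thesis using C1 C2 C3 by blast
qed

end
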